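(* Let $\mathbf s=(s_i)_{i=0}^{n-1}$ define the $n\times n$ Vandermonde matrix $V=V_{\mathbf s}=(s_i^j)_{i,j=0}^{n-1}$. Write $s_+=\max_{i}|s_i|$ and $\bar\epsilon=(s_++1)\epsilon$, where $\log(1/\epsilon)=O(\log n)$, and let $\rho=O(\log(n/\epsilon))$. Then $\alpha_{\bar\epsilon}(V)+\alpha_{\bar\epsilon}(V^T)=O(n\rho\log n)$ and $\beta_{\bar\epsilon}(V)+\beta_{\bar\epsilon}(V^T)=O(n\rho^2\log n)$.
   Context: For a matrix $M$, $|M|=\max_{i,j}|m_{i,j}|$. $\alpha(M)$ (resp. $\beta(M)$) denotes the arithmetic cost (number of flops) of computing $M\mathbf u$ (resp. $M^{-1}\mathbf u$), maximized over all unit vectors $\mathbf u$ and minimized over all algorithms; $\alpha_\epsilon(M)=\min_{|E|\le\epsilon}\alpha(M+E)$ and $\beta_\epsilon(M)=\min_{|E|\le\epsilon}\beta(M+E)$. *)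

theory Defs
  imports Complex_Main "HOL-Library.Landau_Symbols" "HOL-Library.Extended_Nat"
begin

text \<open>An operand is an input coordinate, a (free) constant, or the result of an
earlier instruction. Each instruction is one flop.\<close>

datatype operand = Inp nat | Cst complex | Reg nat

datatype instr =
    Add operand operand
  | Sub operand operand
  | Mul operand operand
  | Dvd operand operand

type_synonym slp = "instr list \<times> operand list"

fun eval_operand :: "(nat \<Rightarrow> complex) \<Rightarrow> complex list \<Rightarrow> operand \<Rightarrow> complex" where
  "eval_operand u rs (Inp i) = u i"
| "eval_operand u rs (Cst c) = c"
| "eval_operand u rs (Reg j) = rs ! j"

fun eval_instr :: "(nat \<Rightarrow> complex) \<Rightarrow> complex list \<Rightarrow> instr \<Rightarrow> complex" where
  "eval_instr u rs (Add a b) = eval_operand u rs a + eval_operand u rs b"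
| "eval_instr u rs (Sub a b) = eval_operand u rs a - eval_operand u rs b"
| "eval_instr u rs (Mul a b) = eval_operand u rs a * eval_operand u rs b"
| "eval_instr u rs (Dvd a b) = eval_operand u rs a / eval_operand u rs b"

definition run :: "(nat \<Rightarrow> complex) \<Rightarrow> instr list \<Rightarrow> complex list" where
  "run u is = foldl (\<lambda>rs ins. rs @ [eval_instr u rs ins]) [] is"

definition exec :: "slp \<Rightarrow> (nat \<Rightarrow> complex) \<Rightarrow> nat \<Rightarrow> complex" where
  "exec P u i = eval_operand u (run u (fst P)) (snd P ! i)"

definition cost :: "slp \<Rightarrow> nat" where
  "cost P = length (fst P)"

type_synonym cmat = "nat \<Rightarrow> nat \<Rightarrow> complex"

definition unit_vec :: "nat \<Rightarrow> (nat \<Rightarrow> complex) \<Rightarrow> bool" where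
  "unit_vec n u \<longleftrightarrow> (\<forall>i\<ge>n. u i = 0) \<and> (\<Sum>i<n. (cmod (u i))\<^sup>2) = 1"

definition mat_vec :: "nat \<Rightarrow> cmat \<Rightarrow> (nat \<Rightarrow> complex) \<Rightarrow> nat \<Rightarrow> complex" where
  "mat_vec n M u = (\<lambda>i. \<Sum>j<n. M i j * u j)"

definition transp :: "cmat \<Rightarrow> cmat" where
  "transp M = (\<lambda>i j. M j i)"

definition is_inverse :: "nat \<Rightarrow> cmat \<Rightarrow> cmat \<Rightarrow> bool" where
  "is_inverse n M N \<longleftrightarrow>
     (\<forall>i<n. \<forall>j<n. (\<Sum>k<n. M i k * N k j) = (if i = j then 1 else 0)) \<and>
     (\<forall>i<n. \<forall>j<n. (\<Sum>k<n. N i k * M k j) = (if i = j then 1 else 0))"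

definition invertible_n :: "nat \<Rightarrow> cmat \<Rightarrow> bool" where
  "invertible_n n M \<longleftrightarrow> (\<exists>N. is_inverse n M N)"

definition mat_inv :: "nat \<Rightarrow> cmat \<Rightarrow> cmat" where
  "mat_inv n M = (SOME N. is_inverse n M N)"

definition computes :: "nat \<Rightarrow> ((nat \<Rightarrow> complex) \<Rightarrow> nat \<Rightarrow> complex) \<Rightarrow> slp \<Rightarrow> bool" where
  "computes n f P \<longleftrightarrow> length (snd P) = n \<and>
     (\<forall>u. unit_vec n u \<longrightarrow> (\<forall>i<n. exec P u i = f u i))"

definition alpha :: "nat \<Rightarrow> cmat \<Rightarrow> enat" where
  "alpha n M = Inf {enat (cost P) | P. computes n (mat_vec n M) P}"

definition beta :: "nat \<Rightarrow> cmat \<Rightarrow> enat" where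
  "beta n M = (if invertible_n n M
     then Inf {enat (cost P) | P. computes n (mat_vec n (mat_inv n M)) P}
     else \<infinity>)"

definition mat_add :: "cmat \<Rightarrow> cmat \<Rightarrow> cmat" where
  "mat_add M E = (\<lambda>i j. M i j + E i j)"

definition alpha_eps :: "nat \<Rightarrow> real \<Rightarrow> cmat \<Rightarrow> enat" where
  "alpha_eps n e M = Inf {alpha n (mat_add M E) | E. \<forall>i<n. \<forall>j<n. cmod (E i j) \<le> e}"

definition beta_eps :: "nat \<Rightarrow> real \<Rightarrow> cmat \<Rightarrow> enat" where
  "beta_eps n e M = Inf {beta n (mat_add M E) | E. \<forall>i<n. \<forall>j<n. cmod (E i j) \<le> e}"

definition vandermonde :: "(nat \<Rightarrow> complex) \<Rightarrow> cmat" where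
  "vandermonde s = (\<lambda>i j. s i ^ j)"

definition s_plus :: "nat \<Rightarrow> (nat \<Rightarrow> complex) \<Rightarrow> real" where
  "s_plus n s = Max {cmod (s i) | i. i < n}"

end

theory Submission
  imports Defs "HOL-Library.Real_Mod" "HOL-Computational_Algebra.Polynomial"
begin


definition outwf :: "slp \<Rightarrow> bool" where
  "outwf P \<longleftrightarrow> (\<forall>z\<in>set (snd P). \<forall>r. z = Reg r \<longrightarrow> r < length (fst P))"

definition rz :: "nat \<Rightarrow> nat \<Rightarrow> nat \<Rightarrow> (complex list \<Rightarrow> complex list) \<Rightarrow> bool" where
  "rz n m c f \<longleftrightarrow> (\<forall>xs. length xs = n \<longrightarrow> length (f xs) = m) \<and>
     (\<exists>P. cost P \<le> c \<and> length (snd P) = m \<and> outwf P \<and>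
        (\<forall>u. \<forall>i<m. exec P u i = f (map u [0..<n]) ! i))"

lemma run_Nil[simp]: "run u [] = []" by (simp add: run_def)
lemma run_snoc[simp]: "run u (is @ [x]) = run u is @ [eval_instr u (run u is) x]"
  by (simp add: run_def)
lemma length_run[simp]: "length (run u is) = length is"
  by (induction "is" rule: rev_induct) auto

fun map_op :: "(nat \<Rightarrow> operand) \<Rightarrow> nat \<Rightarrow> operand \<Rightarrow> operand" where
  "map_op \<iota> L (Inp j) = \<iota> j"
| "map_op \<iota> L (Cst c) = Cst c"
| "map_op \<iota> L (Reg j) = Reg (j + L)"

fun map_ins :: "(operand \<Rightarrow> operand) \<Rightarrow> instr \<Rightarrow> instr" where
  "map_ins g (Add a b) = Add (g a) (g b)"
| "map_ins g (Sub a b) = Sub (g a) (g b)"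
| "map_ins g (Mul a b) = Mul (g a) (g b)"
| "map_ins g (Dvd a b) = Dvd (g a) (g b)"

lemma eval_map_op:
  assumes "\<And>j R2. eval_operand u (R1 @ R2) (\<iota> j) = u' j" "length R1 = L"
  shows "eval_operand u (R1 @ R2) (map_op \<iota> L z) = eval_operand u' R2 z"
  using assms by (cases z) (auto simp: nth_append)

lemma eval_map_ins:
  assumes "\<And>j R2. eval_operand u (R1 @ R2) (\<iota> j) = u' j" "length R1 = L"
  shows "eval_instr u (R1 @ R2) (map_ins (map_op \<iota> L) ins) = eval_instr u' R2 ins"
  using assms by (cases ins) (auto simp: eval_map_op)

lemma run_map:
  assumes "\<And>j R2. eval_operand u (run u is1 @ R2) (\<iota> j) = u' j"
  shows "run u (is1 @ map (map_ins (map_op \<iota> (length is1))) is2) = run u is1 @ run u' is2"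
proof (induction is2 rule: rev_induct)
  case Nil thus ?case by simp
next
  case (snoc x xs)
  have "run u (is1 @ map (map_ins (map_op \<iota> (length is1))) (xs @ [x])) =
        run u (is1 @ map (map_ins (map_op \<iota> (length is1))) xs) @
         [eval_instr u (run u (is1 @ map (map_ins (map_op \<iota> (length is1))) xs))
             (map_ins (map_op \<iota> (length is1)) x)]"
    by (metis append_assoc list.simps(8,9) map_append run_snoc)
  also have "\<dots> = run u is1 @ run u' xs @ [eval_instr u' (run u' xs) x]"
    using snoc eval_map_ins[of u "run u is1" \<iota> u' "length is1" "run u' xs" x] assms
    by simp
  finally show ?case by simp
qed

lemma rz_len: "rz n m c f \<Longrightarrow> length xs = n \<Longrightarrow> length (f xs) = m"
  by (simp add: rz_def)

lemma rz_cong: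
  assumes "rz n m c f" "\<And>xs. length xs = n \<Longrightarrow> g xs = f xs" "c \<le> c'"
  shows "rz n m c' g"
proof -
  obtain P where P: "cost P \<le> c" "length (snd P) = m" "outwf P"
    "\<And>u i. i < m \<Longrightarrow> exec P u i = f (map u [0..<n]) ! i"
    using assms(1) unfolding rz_def by blast
  show ?thesis unfolding rz_def
  proof (intro conjI exI allI impI)
    show "length (g xs) = m" if "length xs = n" for xs using that assms(1,2) by (simp add: rz_len)
    show "cost P \<le> c'" using P(1) assms(3) by simp
    show "exec P u i = g (map u [0..<n]) ! i" if "i < m" for u i
      using P(4)[OF that] assms(2)[of "map u [0..<n]"] by simp
  qed (use P in auto)
qed

lemma rz_mono: "rz n m c f \<Longrightarrow> c \<le> c' \<Longrightarrow> rz n m c' f"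
  using rz_cong by blast

lemma rz_comp:
  assumes f: "rz n m a f" and g: "rz m k b g"
  shows "rz n k (a + b) (\<lambda>xs. g (f xs))"
proof -
  obtain P where P: "cost P \<le> a" "length (snd P) = m" "outwf P"
    "\<And>u i. i < m \<Longrightarrow> exec P u i = f (map u [0..<n]) ! i"
    using f unfolding rz_def by blast
  obtain Q where Q: "cost Q \<le> b" "length (snd Q) = k" "outwf Q"
    "\<And>u i. i < k \<Longrightarrow> exec Q u i = g (map u [0..<m]) ! i"
    using g unfolding rz_def by blast
  define \<iota> where "\<iota> j = (if j < m then snd P ! j else Cst 0)" for j
  define \<sigma> where "\<sigma> = map_op \<iota> (length (fst P))"
  define R where "R = (fst P @ map (map_ins \<sigma>) (fst Q), map \<sigma> (snd Q))"
  have key: "eval_operand u (run u (fst P) @ R2) (\<iota> j) =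
       (if j < m then exec P u j else 0)" for u j R2
  proof (cases "j < m")
    case True
    then have "snd P ! j \<in> set (snd P)" using P(2) by simp
    then have "\<forall>r. snd P ! j = Reg r \<longrightarrow> r < length (fst P)" using P(3) unfolding outwf_def by blast
    then show ?thesis using True unfolding \<iota>_def exec_def
      by (cases "snd P ! j") (auto simp: nth_append)
  qed (simp add: \<iota>_def)
  have runR: "run u (fst R) = run u (fst P) @ run (\<lambda>j. if j < m then exec P u j else 0) (fst Q)" for u
    unfolding R_def \<sigma>_def using run_map[of u "fst P" \<iota>, OF key] by simp
  show ?thesis unfolding rz_def
  proof (intro conjI exI allI impI)
    fix xs :: "complex list" assume "length xs = n"
    then show "length (g (f xs)) = k" using f g by (simp add: rz_len)
  next
    show "cost R \<le> a + b" using P(1) Q(1) by (simp add: R_def cost_def)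
    show "length (snd R) = k" using Q(2) by (simp add: R_def)
    show "outwf R" unfolding outwf_def
    proof (intro ballI allI impI)
      fix z r assume z: "z \<in> set (snd R)" "z = Reg r"
      then obtain y where y: "y \<in> set (snd Q)" "z = \<sigma> y" by (auto simp: R_def)
      show "r < length (fst R)"
      proof (cases y)
        case (Inp j)
        then have "\<iota> j = Reg r" using y z by (simp add: \<sigma>_def)
        then have "j < m" "snd P ! j = Reg r" unfolding \<iota>_def by (auto split: if_splits)
        then have "r < length (fst P)" using P(2,3) unfolding outwf_def by (metis nth_mem)
        then show ?thesis by (simp add: R_def)
      next
        case (Cst c) then show ?thesis using y z by (simp add: \<sigma>_def)
      next
        case (Reg q)
        then have "q < length (fst Q)" using y Q(3) unfolding outwf_def by blast
        moreover have "r = q + length (fst P)" using Reg y z by (simp add: \<sigma>_def)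
        ultimately show ?thesis by (simp add: R_def)
      qed
    qed
  next
    fix u i assume i: "i < k"
    define u' where "u' = (\<lambda>j. if j < m then exec P u j else 0)"
    have "exec R u i = eval_operand u (run u (fst P) @ run u' (fst Q)) (\<sigma> (snd Q ! i))"
      using i Q(2) runR unfolding exec_def R_def u'_def by simp
    also have "\<dots> = eval_operand u' (run u' (fst Q)) (snd Q ! i)"
      unfolding \<sigma>_def by (rule eval_map_op) (use key u'_def in auto)
    also have "\<dots> = g (map u' [0..<m]) ! i" using Q(4)[OF i] by (simp add: exec_def)
    also have "map u' [0..<m] = f (map u [0..<n])"
    proof -
      have "length (f (map u [0..<n])) = m" using f by (simp add: rz_len)
      then show ?thesis unfolding u'_def using P(4)
        by (intro nth_equalityI) auto
    qed
    finally show "exec R u i = g (f (map u [0..<n])) ! i" .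
  qed
qed

lemma rz_app:
  assumes f: "rz n m a f" and g: "rz n k b g"
  shows "rz n (m + k) (a + b) (\<lambda>xs. f xs @ g xs)"
proof -
  obtain P where P: "cost P \<le> a" "length (snd P) = m" "outwf P"
    "\<And>u i. i < m \<Longrightarrow> exec P u i = f (map u [0..<n]) ! i"
    using f unfolding rz_def by blast
  obtain Q where Q: "cost Q \<le> b" "length (snd Q) = k" "outwf Q"
    "\<And>u i. i < k \<Longrightarrow> exec Q u i = g (map u [0..<n]) ! i"
    using g unfolding rz_def by blast
  define \<sigma> where "\<sigma> = map_op Inp (length (fst P))"
  define R where "R = (fst P @ map (map_ins \<sigma>) (fst Q), snd P @ map \<sigma> (snd Q))"
  have runR: "run u (fst R) = run u (fst P) @ run u (fst Q)" for u
    unfolding R_def \<sigma>_def using run_map[of u "fst P" Inp u "fst Q"] by simp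
  show ?thesis unfolding rz_def
  proof (intro conjI exI allI impI)
    fix xs :: "complex list" assume "length xs = n"
    then show "length (f xs @ g xs) = m + k" using f g by (simp add: rz_len)
  next
    show "cost R \<le> a + b" using P(1) Q(1) by (simp add: R_def cost_def)
    show "length (snd R) = m + k" using P(2) Q(2) by (simp add: R_def)
    show "outwf R" unfolding outwf_def
    proof (intro ballI allI impI)
      fix z r assume z: "z \<in> set (snd R)" "z = Reg r"
      then consider "z \<in> set (snd P)" | y where "y \<in> set (snd Q)" "z = \<sigma> y"
        by (auto simp: R_def)
      then show "r < length (fst R)"
      proof cases
        case 1 then show ?thesis using P(3) z unfolding outwf_def by (force simp: R_def)
      next
        case 2
        then have "\<forall>r. y = Reg r \<longrightarrow> r < length (fst Q)" using Q(3) unfolding outwf_def by blast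
        then show ?thesis using 2 z by (cases y) (auto simp: R_def \<sigma>_def)
      qed
    qed
  next
    fix u i assume i: "i < m + k"
    have lf: "length (f (map u [0..<n])) = m" using f by (simp add: rz_len)
    show "exec R u i = (f (map u [0..<n]) @ g (map u [0..<n])) ! i"
    proof (cases "i < m")
      case True
      then have "snd P ! i \<in> set (snd P)" using P(2) by simp
      then have "\<forall>r. snd P ! i = Reg r \<longrightarrow> r < length (fst P)" using P(3) unfolding outwf_def by blast
      then have "exec R u i = exec P u i" using True P(2) unfolding exec_def R_def runR
        using runR[of u] by (cases "snd P ! i") (auto simp: nth_append R_def)
      then show ?thesis using P(4)[OF True] True lf by (simp add: nth_append)
    next
      case False
      then have "exec R u i = eval_operand u (run u (fst P) @ run u (fst Q)) (\<sigma> (snd Q ! (i - m)))"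
        using i P(2) Q(2) runR unfolding exec_def by (simp add: R_def nth_append)
      also have "\<dots> = exec Q u (i - m)" unfolding \<sigma>_def exec_def
        by (rule eval_map_op) auto
      finally show ?thesis using Q(4)[of "i - m"] False i lf by (simp add: nth_append)
    qed
  qed
qed

definition selv :: "complex list \<Rightarrow> (nat + complex) \<Rightarrow> complex" where
  "selv xs z = (case z of Inl i \<Rightarrow> xs ! i | Inr c \<Rightarrow> c)"

fun selop :: "(nat + complex) \<Rightarrow> operand" where
  "selop (Inl i) = Inp i" | "selop (Inr c) = Cst c"

lemma rz_sel:
  assumes "\<And>i. Inl i \<in> set os \<Longrightarrow> i < n" "length os = m"
  shows "rz n m 0 (\<lambda>xs. map (selv xs) os)"
  unfolding rz_def
proof (intro conjI exI allI impI)
  show "cost ([], map selop os) \<le> 0" by (simp add: cost_def)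
  have "selop x \<noteq> Reg r" for x r by (cases x) auto
  then show "outwf ([], map selop os)" unfolding outwf_def by auto
  fix u i assume i: "i < m"
  show "exec ([], map selop os) u i = map (selv (map u [0..<n])) os ! i"
  proof (cases "os ! i")
    case (Inl a)
    then have "a < n" using assms i by (metis nth_mem)
    then show ?thesis using Inl i assms by (simp add: exec_def selv_def)
  qed (use i assms in \<open>simp add: exec_def selv_def\<close>)
qed (use assms in auto)

lemma run_noreg:
  assumes "\<And>ins rs. ins \<in> set is \<Longrightarrow> eval_instr u rs ins = eval_instr u [] ins"
  shows "run u is = map (eval_instr u []) is"
  using assms
proof (induction "is" rule: rev_induct)
  case (snoc x xs)
  have "eval_instr u (run u xs) x = eval_instr u [] x" by (rule snoc.prems) simp
  moreover have "run u xs = map (eval_instr u []) xs" by (rule snoc.IH) (rule snoc.prems, simp)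
  ultimately show ?case by simp
qed simp
lemma rz_bin:
  assumes h: "\<And>a b u rs. eval_instr u rs (opi a b) = h (eval_operand u rs a) (eval_operand u rs b)"
  shows "rz (2 * m) m m (\<lambda>xs. map (\<lambda>i. h (xs ! i) (xs ! (i + m))) [0..<m])"
  unfolding rz_def
proof (intro conjI exI allI impI)
  let ?P = "(map (\<lambda>i. opi (Inp i) (Inp (i + m))) [0..<m], map Reg [0..<m])"
  show "cost ?P \<le> m" by (simp add: cost_def)
  show "outwf ?P" by (auto simp: outwf_def)
  fix u i assume i: "i < m"
  have "run u (fst ?P) = map (eval_instr u []) (fst ?P)"
    by (rule run_noreg) (auto simp: h)
  then show "exec ?P u i = map (\<lambda>i. h (map u [0..<2 * m] ! i) (map u [0..<2 * m] ! (i + m))) [0..<m] ! i"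
    using i by (simp add: exec_def h)
qed auto

lemmas rz_add = rz_bin[of Add "(+)", simplified]
lemmas rz_sub = rz_bin[of Sub "(-)", simplified]
lemmas rz_mul = rz_bin[of Mul "(*)", simplified]



lemma rz_id: "rz n n 0 (\<lambda>xs. xs)"
proof -
  have "rz n n 0 (\<lambda>xs. map (selv xs) (map Inl [0..<n]))" by (rule rz_sel) auto
  then show ?thesis by (rule rz_cong) (auto simp: selv_def intro: nth_equalityI)
qed

lemma rz_selfun:
  assumes "\<And>i. i < m \<Longrightarrow> (\<exists>j<n. \<forall>xs. length xs = n \<longrightarrow> g xs ! i = xs ! j) \<or> (\<exists>c. \<forall>xs. length xs = n \<longrightarrow> g xs ! i = c)"
    and "\<And>xs. length xs = n \<Longrightarrow> length (g xs) = m"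
  shows "rz n m 0 g"
proof -
  have "\<forall>i<m. \<exists>z. (\<forall>j. z = Inl j \<longrightarrow> j < n) \<and> (\<forall>xs. length xs = n \<longrightarrow> g xs ! i = selv xs z)"
  proof (intro allI impI)
    fix i assume "i < m"
    from assms(1)[OF this] show "\<exists>z. (\<forall>j. z = Inl j \<longrightarrow> j < n) \<and> (\<forall>xs. length xs = n \<longrightarrow> g xs ! i = selv xs z)"
    proof
      assume "\<exists>j<n. \<forall>xs. length xs = n \<longrightarrow> g xs ! i = xs ! j"
      then obtain j where "j < n" "\<forall>xs. length xs = n \<longrightarrow> g xs ! i = xs ! j" by blast
      then show ?thesis by (intro exI[of _ "Inl j"]) (auto simp: selv_def)
    next
      assume "\<exists>c. \<forall>xs. length xs = n \<longrightarrow> g xs ! i = c"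
      then obtain c where "\<forall>xs. length xs = n \<longrightarrow> g xs ! i = c" by blast
      then show ?thesis by (intro exI[of _ "Inr c"]) (auto simp: selv_def)
    qed
  qed
  then obtain zf where zf: "\<And>i. i < m \<Longrightarrow> (\<forall>j. zf i = Inl j \<longrightarrow> j < n) \<and> (\<forall>xs. length xs = n \<longrightarrow> g xs ! i = selv xs (zf i))"
    by metis
  have "rz n m 0 (\<lambda>xs. map (selv xs) (map zf [0..<m]))"
    by (rule rz_sel) (use zf in auto)
  then show ?thesis
    by (rule rz_cong) (auto intro!: nth_equalityI simp: assms(2) zf)
qed

lemma rz_par:
  assumes f: "rz n m a f" and g: "rz n' m' b g"
  shows "rz (n + n') (m + m') (a + b) (\<lambda>xs. f (take n xs) @ g (drop n xs))"
proof -
  have t: "rz (n + n') n 0 (\<lambda>xs. take n xs)"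
    by (rule rz_selfun, rule disjI1, rule_tac x=i in exI) auto
  have d: "rz (n + n') n' 0 (\<lambda>xs. drop n xs)"
    by (rule rz_selfun, rule disjI1, rule_tac x="n+i" in exI) auto
  have "rz (n + n') (m + m') ((0 + a) + (0 + b)) (\<lambda>xs. f (take n xs) @ g (drop n xs))"
    by (rule rz_app[OF rz_comp[OF t f] rz_comp[OF d g]])
  then show ?thesis by simp
qed

lemma rz_scale:
  assumes "length cs = m"
  shows "rz m m m (\<lambda>xs. map (\<lambda>i. xs ! i * cs ! i) [0..<m])"
proof -
  have s: "rz m (2 * m) 0 (\<lambda>xs. xs @ cs)"
  proof (rule rz_selfun)
    fix i assume "i < 2 * m"
    show "(\<exists>j<m. \<forall>xs. length xs = m \<longrightarrow> (xs @ cs) ! i = xs ! j) \<or> (\<exists>c. \<forall>xs. length xs = m \<longrightarrow> (xs @ cs) ! i = c)"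
    proof (cases "i < m")
      case True then show ?thesis by (intro disjI1 exI[of _ i]) (auto simp: nth_append)
    next
      case False then show ?thesis by (intro disjI2 exI[of _ "cs ! (i - m)"]) (auto simp: nth_append)
    qed
  qed (auto simp: assms)
  have "rz m m (0 + m) (\<lambda>xs. map (\<lambda>i. (xs @ cs) ! i * (xs @ cs) ! (i + m)) [0..<m])"
    by (rule rz_comp[OF s rz_mul])
  then show ?thesis by (rule rz_cong) (auto simp: nth_append assms)
qed

lemma rz_addf:
  assumes f: "rz n m a f" and g: "rz n m b g"
  shows "rz n m (a + b + m) (\<lambda>xs. map (\<lambda>i. f xs ! i + g xs ! i) [0..<m])"
proof -
  have "rz n m (a + b + m) (\<lambda>xs. map (\<lambda>i. (f xs @ g xs) ! i + (f xs @ g xs) ! (i + m)) [0..<m])"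
    using rz_comp[OF rz_app[OF f g] rz_add[of m, unfolded mult_2]] by (simp add: mult_2)
  then show ?thesis by (rule rz_cong) (auto simp: nth_append rz_len[OF f] rz_len[OF g])
qed

lemma rz_subf:
  assumes f: "rz n m a f" and g: "rz n m b g"
  shows "rz n m (a + b + m) (\<lambda>xs. map (\<lambda>i. f xs ! i - g xs ! i) [0..<m])"
proof -
  have "rz n m (a + b + m) (\<lambda>xs. map (\<lambda>i. (f xs @ g xs) ! i - (f xs @ g xs) ! (i + m)) [0..<m])"
    using rz_comp[OF rz_app[OF f g] rz_sub[of m, unfolded mult_2]] by (simp add: mult_2)
  then show ?thesis by (rule rz_cong) (auto simp: nth_append rz_len[OF f] rz_len[OF g])
qed



definition dft :: "complex \<Rightarrow> complex list \<Rightarrow> complex list" where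
  "dft w xs = map (\<lambda>k. \<Sum>j<length xs. xs ! j * w ^ (j * k)) [0..<length xs]"

lemma length_dft[simp]: "length (dft w xs) = length xs" by (simp add: dft_def)
lemma nth_dft: "k < length xs \<Longrightarrow> dft w xs ! k = (\<Sum>j<length xs. xs ! j * w ^ (j * k))"
  by (simp add: dft_def)

fun fc :: "nat \<Rightarrow> nat" where
  "fc 0 = 0" | "fc (Suc k) = 2 * fc k + 3 * 2 ^ k"

lemma sum_even_odd:
  fixes f :: "nat \<Rightarrow> 'a::comm_monoid_add" and M :: nat
  shows "(\<Sum>j<M + M. f j) = (\<Sum>j<M. f (2 * j)) + (\<Sum>j<M. f (2 * j + 1))"
proof (induction M)
  case (Suc M)
  have "(\<Sum>j<Suc M + Suc M. f j) = (\<Sum>j<M + M. f j) + f (2 * M) + f (2 * M + 1)"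
    by (simp add: mult_2 add.assoc)
  then show ?case using Suc by (simp add: algebra_simps)
qed simp

lemma dft_split:
  fixes w :: complex
  assumes len: "length xs = M + M" and wM: "w ^ M = -1" and i: "i < M"
  defines "ev \<equiv> map (\<lambda>j. xs ! (2 * j)) [0..<M]" and "od \<equiv> map (\<lambda>j. xs ! (2 * j + 1)) [0..<M]"
  shows "dft w xs ! i = dft (w^2) ev ! i + w ^ i * dft (w^2) od ! i"
    and "dft w xs ! (i + M) = dft (w^2) ev ! i - w ^ i * dft (w^2) od ! i"
proof -
  have "w ^ (2 * M) = (w ^ M) ^ 2" by (metis power_mult mult.commute)
  then have w2M: "w ^ (2 * M) = 1" using wM by simp
  have e1: "w ^ (2 * j * i) = (w^2) ^ (j * i)" for j by (simp add: power_mult mult.assoc)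
  have o1: "w ^ ((2 * j + 1) * i) = w ^ i * (w^2) ^ (j * i)" for j
  proof -
    have "(2 * j + 1) * i = i + 2 * (j * i)" by simp
    then show ?thesis by (simp only: power_add power_mult)
  qed
  have e2: "w ^ (2 * j * (i + M)) = (w^2) ^ (j * i)" for j
  proof -
    have "2 * j * (i + M) = 2 * (j * i) + (2 * M) * j" by (simp add: algebra_simps)
    then have "w ^ (2 * j * (i + M)) = (w^2) ^ (j * i) * (w ^ (2 * M)) ^ j"
      by (simp only: power_add power_mult)
    then show ?thesis using w2M by simp
  qed
  have o2: "w ^ ((2 * j + 1) * (i + M)) = - (w ^ i * (w^2) ^ (j * i))" for j
  proof -
    have "(2 * j + 1) * (i + M) = 2 * (j * i) + (2 * M) * j + i + M" by (simp add: algebra_simps)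
    then have "w ^ ((2 * j + 1) * (i + M)) = (w^2) ^ (j * i) * (w ^ (2 * M)) ^ j * w ^ i * w ^ M"
      by (simp only: power_add power_mult)
    then show ?thesis using w2M wM by simp
  qed
  have "dft w xs ! i = (\<Sum>j<M + M. xs ! j * w ^ (j * i))" using i len by (simp add: nth_dft)
  also have "\<dots> = (\<Sum>j<M. xs ! (2 * j) * w ^ (2 * j * i)) + (\<Sum>j<M. xs ! (2 * j + 1) * w ^ ((2 * j + 1) * i))"
    by (rule sum_even_odd)
  also have "\<dots> = dft (w^2) ev ! i + w ^ i * dft (w^2) od ! i"
  proof -
    have a: "(\<Sum>j<M. xs ! (2 * j) * w ^ (2 * j * i)) = dft (w^2) ev ! i"
      using i by (simp add: nth_dft ev_def e1)
    have b: "(\<Sum>j<M. xs ! (2 * j + 1) * w ^ ((2 * j + 1) * i)) = w ^ i * dft (w^2) od ! i"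
    proof -
      have "(\<Sum>j<M. xs ! (2 * j + 1) * w ^ ((2 * j + 1) * i)) = (\<Sum>j<M. w ^ i * (od ! j * (w^2) ^ (j * i)))"
        apply (rule sum.cong[OF refl]) apply (subst o1) by (simp add: od_def)
      then show ?thesis using i by (simp add: nth_dft sum_distrib_left od_def)
    qed
    show ?thesis using a b by simp
  qed
  finally show "dft w xs ! i = dft (w^2) ev ! i + w ^ i * dft (w^2) od ! i" .
  have "dft w xs ! (i + M) = (\<Sum>j<M + M. xs ! j * w ^ (j * (i + M)))" using i len by (simp add: nth_dft)
  also have "\<dots> = (\<Sum>j<M. xs ! (2 * j) * w ^ (2 * j * (i + M))) + (\<Sum>j<M. xs ! (2 * j + 1) * w ^ ((2 * j + 1) * (i + M)))"
    by (rule sum_even_odd)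
  also have "\<dots> = dft (w^2) ev ! i - w ^ i * dft (w^2) od ! i"
  proof -
    have a: "(\<Sum>j<M. xs ! (2 * j) * w ^ (2 * j * (i + M))) = dft (w^2) ev ! i"
      using i by (simp add: nth_dft ev_def e2)
    have b: "(\<Sum>j<M. xs ! (2 * j + 1) * w ^ ((2 * j + 1) * (i + M))) = - (w ^ i * dft (w^2) od ! i)"
    proof -
      have "(\<Sum>j<M. xs ! (2 * j + 1) * w ^ ((2 * j + 1) * (i + M))) = (\<Sum>j<M. - (w ^ i * (od ! j * (w^2) ^ (j * i))))"
        apply (rule sum.cong[OF refl]) apply (subst o2) by (simp add: od_def)
      then show ?thesis using i by (simp add: nth_dft sum_distrib_left od_def sum_negf)
    qed
    show ?thesis using a b by simp
  qed
  finally show "dft w xs ! (i + M) = dft (w^2) ev ! i - w ^ i * dft (w^2) od ! i" .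
qed

lemma fft: "(k > 0 \<longrightarrow> w ^ (2 ^ (k - 1)) = -1) \<Longrightarrow> rz (2 ^ k) (2 ^ k) (fc k) (dft w)"
proof (induction k arbitrary: w)
  case 0
  have "rz 1 1 0 (dft w)" using rz_id[of 1]
    by (rule rz_cong) (auto simp: dft_def intro!: nth_equalityI)
  then show ?case by simp
next
  case (Suc k)
  define M where "M = (2::nat) ^ k"
  have wM: "w ^ M = -1" using Suc.prems by (simp add: M_def)
  have "(w^2) ^ (2 ^ (k - 1)) = -1" if "k > 0"
  proof -
    have "(w^2) ^ (2 ^ (k - 1)) = w ^ (2 * 2 ^ (k - 1))" by (simp add: power_mult)
    also have "2 * 2 ^ (k - 1) = M" using that by (simp add: M_def power_Suc[symmetric])
    finally show ?thesis using wM by simp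
  qed
  then have IH: "rz M M (fc k) (dft (w^2))" using Suc.IH unfolding M_def by blast
  define ev where "ev xs = map (\<lambda>j. xs ! (2 * j)) [0..<M]" for xs :: "complex list"
  define od where "od xs = map (\<lambda>j. xs ! (2 * j + 1)) [0..<M]" for xs :: "complex list"
  define tw where "tw = map (\<lambda>i. w ^ i) [0..<M]"
  have s1: "rz (M + M) (M + M) 0 (\<lambda>xs. ev xs @ od xs)"
  proof (rule rz_selfun)
    fix i assume i: "i < M + M"
    show "(\<exists>j<M + M. \<forall>xs. length xs = M + M \<longrightarrow> (ev xs @ od xs) ! i = xs ! j) \<or>
          (\<exists>c. \<forall>xs. length xs = M + M \<longrightarrow> (ev xs @ od xs) ! i = c)"
    proof (cases "i < M")
      case True then show ?thesis
        by (intro disjI1 exI[of _ "2 * i"]) (auto simp: nth_append ev_def)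
    next
      case False then show ?thesis using i
        by (intro disjI1 exI[of _ "2 * (i - M) + 1"]) (auto simp: nth_append ev_def od_def)
    qed
  qed (auto simp: ev_def od_def)
  define F2 where "F2 ys = dft (w^2) (take M ys) @ dft (w^2) (drop M ys)" for ys :: "complex list"
  define F3 where "F3 ys = take M ys @ map (\<lambda>i. drop M ys ! i * tw ! i) [0..<M]" for ys :: "complex list"
  define F4 where "F4 ys = map (\<lambda>i. ys ! i + ys ! (i + M)) [0..<M] @
                                             map (\<lambda>i. ys ! i - ys ! (i + M)) [0..<M]" for ys :: "complex list"
  have s2: "rz (M + M) (M + M) (fc k + fc k) F2"
    unfolding F2_def by (rule rz_par[OF IH IH])
  have s3: "rz (M + M) (M + M) (0 + M) F3"
    unfolding F3_def by (rule rz_par[OF rz_id rz_scale]) (simp add: tw_def)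
  have s4: "rz (M + M) (M + M) (M + M) F4"
    unfolding F4_def by (rule rz_app[OF rz_add[of M, unfolded mult_2] rz_sub[of M, unfolded mult_2]])
  have all: "rz (M + M) (M + M) (0 + (fc k + fc k) + (0 + M) + (M + M))
     (\<lambda>xs. F4 (F3 (F2 (ev xs @ od xs))))"
    by (rule rz_comp[OF rz_comp[OF rz_comp[OF s1 s2] s3] s4])
  have eq: "dft w xs = map (\<lambda>i. ys ! i + ys ! (i + M)) [0..<M] @ map (\<lambda>i. ys ! i - ys ! (i + M)) [0..<M]"
    if len: "length xs = M + M" and ys: "ys = take M zs @ map (\<lambda>i. drop M zs ! i * tw ! i) [0..<M]"
      and zs: "zs = dft (w^2) (ev xs) @ dft (w^2) (od xs)" for xs ys zs
  proof (rule nth_equalityI)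
    show "length (dft w xs) = length (map (\<lambda>i. ys ! i + ys ! (i + M)) [0..<M] @ map (\<lambda>i. ys ! i - ys ! (i + M)) [0..<M])"
      using len by simp
    fix i assume "i < length (dft w xs)"
    then have i: "i < M + M" using len by simp
    have lz: "length (dft (w^2) (ev xs)) = M" "length (dft (w^2) (od xs)) = M" by (simp_all add: ev_def od_def)
    have y1: "ys ! j = dft (w^2) (ev xs) ! j" if "j < M" for j
      using that lz by (simp add: ys zs nth_append)
    have y2: "ys ! (j + M) = dft (w^2) (od xs) ! j * w ^ j" if "j < M" for j
      using that lz by (simp add: ys zs nth_append tw_def)
    show "dft w xs ! i = (map (\<lambda>i. ys ! i + ys ! (i + M)) [0..<M] @ map (\<lambda>i. ys ! i - ys ! (i + M)) [0..<M]) ! i"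
    proof (cases "i < M")
      case True
      have "(map (\<lambda>i. ys ! i + ys ! (i + M)) [0..<M] @ map (\<lambda>i. ys ! i - ys ! (i + M)) [0..<M]) ! i
          = ys ! i + ys ! (i + M)" using True by (simp add: nth_append)
      also have "\<dots> = dft (w^2) (ev xs) ! i + w ^ i * dft (w^2) (od xs) ! i"
        using True by (simp only: y1 y2 mult.commute)
      also have "\<dots> = dft w xs ! i" using dft_split(1)[OF len wM True] by (simp only: ev_def od_def)
      finally show ?thesis by simp
    next
      case False
      define j where "j = i - M"
      have j: "j < M" "i = j + M" using False i by (auto simp: j_def)
      have "(map (\<lambda>i. ys ! i + ys ! (i + M)) [0..<M] @ map (\<lambda>i. ys ! i - ys ! (i + M)) [0..<M]) ! i
          = ys ! j - ys ! (j + M)" using j by (simp add: nth_append)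
      also have "\<dots> = dft (w^2) (ev xs) ! j - w ^ j * dft (w^2) (od xs) ! j"
        using j by (simp only: y1 y2 mult.commute)
      also have "\<dots> = dft w xs ! i" using dft_split(2)[OF len wM j(1)] j(2) by (simp only: ev_def od_def)
      finally show ?thesis by simp
    qed
  qed
  have "rz (M + M) (M + M) (fc (Suc k)) (dft w)"
  proof (rule rz_cong[OF all])
    fix xs :: "complex list" assume len: "length xs = M + M"
    have l: "length (ev xs) = M" by (simp add: ev_def)
    show "dft w xs = F4 (F3 (F2 (ev xs @ od xs)))"
      unfolding F4_def by (rule eq[OF len]) (simp_all add: F3_def F2_def l)
  qed (simp add: M_def)
  moreover have e: "(2::nat) ^ Suc k = M + M" by (simp add: M_def)
  ultimately show ?case by (simp only: e)
qed


definition rou :: "nat \<Rightarrow> complex" where "rou N = cis (2 * pi / real N)"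

lemma rou_pow: "rou N ^ p = cis (real p * (2 * pi / real N))"
  by (simp add: rou_def DeMoivre)

lemma rou_N: "N > 0 \<Longrightarrow> rou N ^ N = 1"
  by (simp add: rou_pow)

lemma rou_nz[simp]: "rou N \<noteq> 0"
  by (simp add: rou_def)

lemma rou_pow_ne1: assumes "0 < d" "d < N" shows "rou N ^ d \<noteq> 1"
proof
  assume "rou N ^ d = 1"
  then obtain n :: int where n: "real d * (2 * pi / real N) = of_int n * (2 * pi)"
    by (auto simp: rou_pow cis_eq_1_iff)
  have "(real d / real N) * (2 * pi) = real d * (2 * pi / real N)" by simp
  with n have "(real d / real N) * (2 * pi) = of_int n * (2 * pi)" by simp
  then have "real d / real N = of_int n" using pi_gt_zero by (simp only: mult_right_cancel)
  moreover have "0 < real d / real N" "real d / real N < 1" using assms by auto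
  ultimately have "0 < n" "n < 1" by simp_all
  then show False by simp
qed

lemma rou_inj: assumes "p < N" "q < N" "rou N ^ p = rou N ^ q" shows "p = q"
proof (rule ccontr)
  assume ne: "p \<noteq> q"
  have aux: "a = b" if "a < N" "b < N" "a < b" "rou N ^ a = rou N ^ b" for a b
  proof -
    have "rou N ^ b = rou N ^ a * rou N ^ (b - a)" using that by (metis le_add_diff_inverse less_imp_le power_add)
    then have "rou N ^ (b - a) = 1" using that(4) by simp
    moreover have "0 < b - a" "b - a < N" using that by auto
    ultimately show ?thesis using rou_pow_ne1[of "b - a" N] by blast
  qed
  show False using ne aux[of p q] aux[of q p] assms by (cases "p < q") auto
qed

lemma rou_half: assumes "N = 2 ^ Suc k" shows "rou N ^ (2 ^ k) = -1"
  using assms by (simp add: rou_pow)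

lemma rou_inv_half: assumes "N = 2 ^ Suc k" shows "(inverse (rou N)) ^ (2 ^ k) = -1"
  using rou_half[OF assms] by (metis power_inverse inverse_minus_eq inverse_1)

lemma rou_sum:
  assumes N: "N > 0" and p: "p < N" and j: "j < N"
  shows "(\<Sum>k<N. rou N ^ (p * k) * inverse (rou N) ^ (j * k)) = (if p = j then of_nat N else 0)"
proof -
  define z where "z = rou N ^ p * inverse (rou N) ^ j"
  have zk: "rou N ^ (p * k) * inverse (rou N) ^ (j * k) = z ^ k" for k
    by (simp add: z_def power_mult power_mult_distrib)
  show ?thesis
  proof (cases "p = j")
    case True
    then have "z = 1" by (simp add: z_def power_inverse)
    have "(\<Sum>k<N. rou N ^ (p * k) * inverse (rou N) ^ (j * k)) = (\<Sum>k<N. z ^ k)" by (simp only: zk)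
    then show ?thesis using True \<open>z = 1\<close> by simp
  next
    case False
    have z1: "z \<noteq> 1"
    proof
      assume "z = 1"
      then have "rou N ^ p = rou N ^ j" by (simp add: z_def power_inverse field_simps)
      then show False using rou_inj[OF p j] False by simp
    qed
    have "z ^ N = (rou N ^ N) ^ p * inverse (rou N ^ N) ^ j"
      by (simp add: z_def power_mult_distrib power_inverse flip: power_mult) (simp add: mult.commute)
    then have zN: "z ^ N = 1" using rou_N[OF N] by simp
    have "(\<Sum>k<N. z ^ k) = 0" using geometric_sum[OF z1, of N] zN by simp
    moreover have "(\<Sum>k<N. rou N ^ (p * k) * inverse (rou N) ^ (j * k)) = (\<Sum>k<N. z ^ k)" by (simp only: zk)
    ultimately show ?thesis using False by simp
  qed
qed

lemma conv_dft:
  fixes x y :: "nat \<Rightarrow> complex"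
  assumes N: "N > 0" and x0: "\<And>i. i \<ge> la \<Longrightarrow> x i = 0" and y0: "\<And>l. l \<ge> lb \<Longrightarrow> y l = 0"
    and lab: "la + lb \<le> N + 1" and j: "j < N"
  shows "(\<Sum>k<N. (\<Sum>i<N. x i * rou N ^ (i * k)) * (\<Sum>l<N. y l * rou N ^ (l * k)) / of_nat N
             * inverse (rou N) ^ (j * k)) = (\<Sum>i\<le>j. x i * y (j - i))"
proof -
  let ?w = "rou N" and ?v = "inverse (rou N)"
  have trm: "x i * y l * (\<Sum>k<N. ?w ^ ((i + l) * k) * ?v ^ (j * k)) = x i * y l * (if i + l = j then of_nat N else 0)"
    if "i < N" "l < N" for i l
  proof (cases "x i * y l = 0")
    case False
    then have "i < la" "l < lb" using x0 y0 by (auto simp: not_less[symmetric])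
    then have "i + l < N" using lab by linarith
    then show ?thesis using rou_sum[OF N _ j] by simp
  qed simp
  have "(\<Sum>k<N. (\<Sum>i<N. x i * ?w ^ (i * k)) * (\<Sum>l<N. y l * ?w ^ (l * k)) / of_nat N * ?v ^ (j * k))
      = (\<Sum>k<N. \<Sum>i<N. \<Sum>l<N. x i * y l * (?w ^ ((i + l) * k) * ?v ^ (j * k)) / of_nat N)"
  proof (intro sum.cong refl)
    fix k
    show "(\<Sum>i<N. x i * ?w ^ (i * k)) * (\<Sum>l<N. y l * ?w ^ (l * k)) / of_nat N * ?v ^ (j * k) =
          (\<Sum>i<N. \<Sum>l<N. x i * y l * (?w ^ ((i + l) * k) * ?v ^ (j * k)) / of_nat N)"
    proof -
      have g: "(\<Sum>i\<in>A. f i) * (\<Sum>l\<in>B. g l) * c = (\<Sum>i\<in>A. \<Sum>l\<in>B. f i * g l * c)"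
        for A B and f g :: "nat \<Rightarrow> complex" and c
        by (simp add: sum_distrib_left sum_distrib_right mult.assoc) (rule sum.swap)
      have "(\<Sum>i<N. x i * ?w ^ (i * k)) * (\<Sum>l<N. y l * ?w ^ (l * k)) / of_nat N * ?v ^ (j * k)
          = (\<Sum>i<N. x i * ?w ^ (i * k)) * (\<Sum>l<N. y l * ?w ^ (l * k)) * (?v ^ (j * k) / of_nat N)"
        by simp
      also have "\<dots> = (\<Sum>i<N. \<Sum>l<N. (x i * ?w ^ (i * k)) * (y l * ?w ^ (l * k)) * (?v ^ (j * k) / of_nat N))"
        by (rule g)
      also have "\<dots> = (\<Sum>i<N. \<Sum>l<N. x i * y l * (?w ^ ((i + l) * k) * ?v ^ (j * k)) / of_nat N)"
        by (intro sum.cong refl) (simp add: add_mult_distrib power_add)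
      finally show ?thesis .
    qed
  qed
  also have "\<dots> = (\<Sum>i<N. \<Sum>k<N. \<Sum>l<N. x i * y l * (?w ^ ((i + l) * k) * ?v ^ (j * k)) / of_nat N)"
    by (rule sum.swap)
  also have "\<dots> = (\<Sum>i<N. \<Sum>l<N. \<Sum>k<N. x i * y l * (?w ^ ((i + l) * k) * ?v ^ (j * k)) / of_nat N)"
    by (rule sum.cong[OF refl], rule sum.swap)
  also have "\<dots> = (\<Sum>i<N. \<Sum>l<N. x i * y l * (\<Sum>k<N. ?w ^ ((i + l) * k) * ?v ^ (j * k)) / of_nat N)"
    by (rule sum.cong[OF refl], rule sum.cong[OF refl]) (simp only: sum_distrib_left sum_divide_distrib)
  also have "\<dots> = (\<Sum>i<N. \<Sum>l<N. x i * y l * (if i + l = j then 1 else 0))"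
    by (intro sum.cong refl) (use N in \<open>simp add: trm\<close>)
  also have "\<dots> = (\<Sum>i<N. if i \<le> j then x i * y (j - i) else 0)"
  proof (intro sum.cong refl)
    fix i assume "i \<in> {..<N}"
    show "(\<Sum>l<N. x i * y l * (if i + l = j then 1 else 0)) = (if i \<le> j then x i * y (j - i) else 0)"
    proof (cases "i \<le> j")
      case True
      have "(\<Sum>l<N. x i * y l * (if i + l = j then 1 else 0)) = (\<Sum>l<N. if l = j - i then x i * y l else 0)"
        by (intro sum.cong refl) (use True in auto)
      also have "\<dots> = x i * y (j - i)" using j True by (simp add: sum.delta)
      finally show ?thesis using True by simp
    qed auto
  qed
  also have "\<dots> = (\<Sum>i\<le>j. x i * y (j - i))"
  proof -
    have "{i\<in>{..<N}. i \<le> j} = {..j}" using j by auto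
    then show ?thesis by (simp add: sum.inter_filter[symmetric])
  qed
  finally show ?thesis .
qed



definition cl :: "nat \<Rightarrow> complex poly \<Rightarrow> complex list" where
  "cl L p = map (coeff p) [0..<L]"

lemma length_cl[simp]: "length (cl L p) = L" by (simp add: cl_def)
lemma nth_cl[simp]: "i < L \<Longrightarrow> cl L p ! i = coeff p i" by (simp add: cl_def)

lemma Poly_cl: "degree p < L \<Longrightarrow> Poly (cl L p) = p"
  by (rule poly_eqI) (auto simp: cl_def nth_default_def coeff_eq_0)

lemma cl_Poly: "length a = L \<Longrightarrow> cl L (Poly a) = a"
  by (auto simp: cl_def nth_default_def intro!: nth_equalityI)

lemma fc_closed: "fc K * 2 = 3 * K * 2 ^ K"
  by (induction K) (auto simp: algebra_simps)

lemma pmul_fft: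
  assumes NK: "N = 2 ^ Suc K" and dq: "degree q < lb" and lab: "la + lb \<le> N + 1" and L: "L \<le> N"
  shows "rz la L (2 * fc (Suc K) + N) (\<lambda>a. cl L (Poly a * q))"
proof -
  let ?w = "rou N" and ?v = "inverse (rou N)"
  have N0: "N > 0" using NK by simp
  have laN: "la \<le> N" using lab dq by linarith
  define bp where "bp = map (coeff q) [0..<N]"
  define cs where "cs = map (\<lambda>k. dft ?w bp ! k / of_nat N) [0..<N]"
  define F1 where "F1 a = a @ replicate (N - la) (0::complex)" for a :: "complex list"
  define F3 where "F3 ys = map (\<lambda>i. ys ! i * cs ! i) [0..<N]" for ys :: "complex list"
  define F5 where "F5 ys = take L ys" for ys :: "complex list"
  have p1: "rz la N 0 F1"
  proof (rule rz_selfun)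
    fix i assume i: "i < N"
    show "(\<exists>j<la. \<forall>xs. length xs = la \<longrightarrow> F1 xs ! i = xs ! j) \<or> (\<exists>c. \<forall>xs. length xs = la \<longrightarrow> F1 xs ! i = c)"
    proof (cases "i < la")
      case True then show ?thesis by (intro disjI1 exI[of _ i]) (auto simp: F1_def nth_append)
    next
      case False then show ?thesis using i by (intro disjI2 exI[of _ 0]) (auto simp: F1_def nth_append)
    qed
  qed (use laN in \<open>simp add: F1_def\<close>)
  have p2: "rz N N (fc (Suc K)) (dft ?w)" unfolding NK by (rule fft) (simp add: rou_half NK)
  have p3: "rz N N N F3" unfolding F3_def by (rule rz_scale) (simp add: cs_def)
  have p4: "rz N N (fc (Suc K)) (dft ?v)" unfolding NK by (rule fft) (simp add: rou_inv_half NK)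
  have p5: "rz N L 0 F5" unfolding F5_def
    by (rule rz_selfun, rule disjI1, rule_tac x=i in exI) (use L in auto)
  have all: "rz la L (0 + fc (Suc K) + N + fc (Suc K) + 0) (\<lambda>a. F5 (dft ?v (F3 (dft ?w (F1 a)))))"
    by (rule rz_comp[OF rz_comp[OF rz_comp[OF rz_comp[OF p1 p2] p3] p4] p5])
  show ?thesis
  proof (rule rz_cong[OF all])
    fix a :: "complex list" assume la: "length a = la"
    show "cl L (Poly a * q) = F5 (dft ?v (F3 (dft ?w (F1 a))))"
    proof (rule nth_equalityI)
      show "length (cl L (Poly a * q)) = length (F5 (dft ?v (F3 (dft ?w (F1 a)))))"
        using L la laN by (simp add: F5_def F3_def F1_def)
      fix j assume "j < length (cl L (Poly a * q))"
      then have jL: "j < L" by simp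
      then have jN: "j < N" using L by simp
      define x where "x i = nth_default 0 a i" for i
      have lF1: "length (F1 a) = N" using la laN by (simp add: F1_def)
      have F1i: "F1 a ! i = x i" if "i < N" for i
        using that la by (auto simp: F1_def nth_append x_def nth_default_def)
      have bpi: "bp ! i = coeff q i" if "i < N" for i using that by (simp add: bp_def)
      have A: "dft ?w (F1 a) ! k = (\<Sum>i<N. x i * ?w ^ (i * k))" if "k < N" for k
        using that lF1 by (simp add: nth_dft F1i)
      have B: "dft ?w bp ! k = (\<Sum>l<N. coeff q l * ?w ^ (l * k))" if "k < N" for k
        using that by (simp add: nth_dft bp_def)
      have "F5 (dft ?v (F3 (dft ?w (F1 a)))) ! j = dft ?v (F3 (dft ?w (F1 a))) ! j"
        using jL by (simp add: F5_def)
      also have "\<dots> = (\<Sum>k<N. F3 (dft ?w (F1 a)) ! k * ?v ^ (k * j))"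
        using jN by (simp add: nth_dft F3_def)
      also have "\<dots> = (\<Sum>k<N. (\<Sum>i<N. x i * ?w ^ (i * k)) * (\<Sum>l<N. coeff q l * ?w ^ (l * k)) / of_nat N
             * ?v ^ (j * k))"
        by (intro sum.cong refl) (simp add: F3_def cs_def A B mult.commute)
      also have "\<dots> = (\<Sum>i\<le>j. x i * coeff q (j - i))"
      proof (rule conv_dft[OF N0 _ _ lab jN])
        show "x i = 0" if "la \<le> i" for i using that la by (simp add: x_def nth_default_def)
        show "coeff q l = 0" if "lb \<le> l" for l using that dq by (simp add: coeff_eq_0)
      qed
      also have "\<dots> = cl L (Poly a * q) ! j" using jL by (simp add: coeff_mult x_def)
      finally show "cl L (Poly a * q) ! j = F5 (dft ?v (F3 (dft ?w (F1 a)))) ! j" by simp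
    qed
  qed simp
qed



function clog :: "nat \<Rightarrow> nat" where
  "clog x = (if x \<le> 1 then 0 else Suc (clog ((x + 1) div 2)))"
  by auto
termination by (relation "measure id") auto

declare clog.simps[simp del]

lemma clog_le: "x \<le> 2 ^ clog x"
proof (induction x rule: clog.induct)
  case (1 x)
  show ?case
  proof (cases "x \<le> 1")
    case True then show ?thesis by (simp add: clog.simps)
  next
    case False
    then have "(x + 1) div 2 \<le> 2 ^ clog ((x + 1) div 2)" using 1 by simp
    then show ?thesis using False by (subst clog.simps) simp
  qed
qed

lemma clog_pos: "0 < clog x \<Longrightarrow> 2 ^ (clog x - 1) < x"
proof (induction x rule: clog.induct)
  case (1 x)
  show ?case
  proof (cases "x \<le> 1")
    case True then show ?thesis using 1 by (simp add: clog.simps)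
  next
    case False
    define y where "y = (x + 1) div 2"
    have cx: "clog x = Suc (clog y)" using False by (subst clog.simps) (simp add: y_def)
    show ?thesis
    proof (cases "clog y = 0")
      case True then show ?thesis using cx False by simp
    next
      case False2: False
      then have "2 ^ (clog y - 1) < y" using 1 \<open>\<not> x \<le> 1\<close> by (simp add: y_def)
      then have "2 * 2 ^ (clog y - 1) \<le> 2 * (y - 1)" by simp
      moreover have "2 * 2 ^ (clog y - 1) = (2::nat) ^ clog y" using False2
        by (cases "clog y") auto
      moreover have "2 * (y - 1) < x" using False by (simp add: y_def)
      ultimately show ?thesis using cx by simp
    qed
  qed
qed

lemma clog_lt: "1 \<le> x \<Longrightarrow> 2 ^ clog x < 2 * x"
proof (cases "clog x = 0")
  case False
  then have "2 ^ (clog x - 1) < x" by (intro clog_pos) simp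
  moreover have "(2::nat) ^ clog x = 2 * 2 ^ (clog x - 1)" using False
    by (cases "clog x") auto
  ultimately show ?thesis by simp
qed simp

lemma clog_least: "x \<le> 2 ^ k \<Longrightarrow> clog x \<le> k"
proof (rule ccontr)
  assume a: "x \<le> 2 ^ k" "\<not> clog x \<le> k"
  then have "(2::nat) ^ k \<le> 2 ^ (clog x - 1)" by (intro power_increasing) auto
  moreover have "2 ^ (clog x - 1) < x" using a by (intro clog_pos) simp
  ultimately show False using a(1) by linarith
qed

lemma clog_mono: "x \<le> y \<Longrightarrow> clog x \<le> clog y"
  using clog_least[of x "clog y"] clog_le[of y] by simp

lemma clog_half: "2 \<le> m \<Longrightarrow> clog m = Suc (clog ((m + 1) div 2))"
  by (subst clog.simps) simp

definition pmc :: "nat \<Rightarrow> nat" where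
  "pmc x = 2 * fc (Suc (clog x)) + 2 ^ Suc (clog x)"

lemma pm:
  assumes "degree q < lb" "la + lb \<le> x + 1" "L \<le> x"
  shows "rz la L (pmc x) (\<lambda>a. cl L (Poly a * q))"
  unfolding pmc_def
proof (rule pmul_fft[OF refl assms(1)])
  have "x \<le> 2 ^ clog x" by (rule clog_le)
  then show "la + lb \<le> 2 ^ Suc (clog x) + 1" "L \<le> 2 ^ Suc (clog x)" using assms by simp_all
qed

lemma pmc_bound: "1 \<le> x \<Longrightarrow> pmc x \<le> 16 * x * (clog x + 1)"
proof -
  assume x: "1 \<le> x"
  let ?c = "clog x"
  have "pmc x = (3 * Suc ?c + 1) * 2 ^ Suc ?c" unfolding pmc_def
    using fc_closed[of "Suc ?c"] by (simp add: algebra_simps)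
  also have "\<dots> = (3 * ?c + 4) * (2 * 2 ^ ?c)" by simp
  also have "\<dots> \<le> (3 * ?c + 4) * (4 * x)" using clog_lt[OF x] by (intro mult_le_mono2) simp
  also have "\<dots> \<le> 16 * x * (?c + 1)" by (simp add: algebra_simps)
  finally show ?thesis .
qed

lemma pmc_mono: "x \<le> y \<Longrightarrow> pmc x \<le> pmc y"
proof -
  assume "x \<le> y"
  then have c: "clog x \<le> clog y" by (rule clog_mono)
  have fm: "fc a \<le> fc b" if "a \<le> b" for a b
  proof -
    have "(2::nat) ^ a \<le> 2 ^ b" using that by (rule power_increasing) simp
    then have "3 * a * 2 ^ a \<le> 3 * b * (2::nat) ^ b" using that by (simp add: mult_le_mono)
    then have "fc a * 2 \<le> fc b * 2" unfolding fc_closed .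
    then show ?thesis by simp
  qed
  have a: "(2::nat) ^ (clog x) \<le> 2 ^ (clog y)" using c by (intro power_increasing) auto
  have b: "fc (clog x) \<le> fc (clog y)" using fm c by simp
  have e: "pmc z = 8 * 2 ^ clog z + 4 * fc (clog z)" for z by (simp add: pmc_def)
  show ?thesis unfolding e using a b by linarith
qed



definition PP :: "complex poly list \<Rightarrow> complex poly" where
  "PP fs = (\<Prod>k<length fs. fs ! k)"

definition NN :: "complex poly list \<Rightarrow> complex list \<Rightarrow> complex poly" where
  "NN fs us = (\<Sum>i<length fs. smult (us ! i) (\<Prod>k\<in>{..<length fs} - {i}. fs ! k))"

lemma prod_shift:
  fixes g :: "nat \<Rightarrow> 'a::comm_monoid_mult"
  shows "(\<Prod>k\<in>{l..<l+r}. g k) = (\<Prod>k<r. g (k + l))"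
  by (rule prod.reindex_bij_witness[where i="\<lambda>k. k + l" and j="\<lambda>k. k - l"]) auto

lemma prod_shift_rm:
  fixes g :: "nat \<Rightarrow> 'a::comm_monoid_mult"
  shows "(\<Prod>k\<in>{l..<l+r} - {l + j}. g k) = (\<Prod>k\<in>{..<r} - {j}. g (k + l))"
  by (rule prod.reindex_bij_witness[where i="\<lambda>k. k + l" and j="\<lambda>k. k - l"]) auto

lemma sum_shift:
  fixes g :: "nat \<Rightarrow> 'a::comm_monoid_add"
  shows "(\<Sum>k\<in>{l..<l+r}. g k) = (\<Sum>k<r. g (k + l))"
  by (rule sum.reindex_bij_witness[where i="\<lambda>k. k + l" and j="\<lambda>k. k - l"]) auto

lemma PP_append: "PP (L @ R) = PP L * PP R"
proof -
  have "PP (L @ R) = (\<Prod>k\<in>{..<length L} \<union> {length L..<length L + length R}. (L @ R) ! k)"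
    unfolding PP_def by (intro prod.cong) auto
  also have "\<dots> = (\<Prod>k<length L. (L @ R) ! k) * (\<Prod>k\<in>{length L..<length L + length R}. (L @ R) ! k)"
    by (rule prod.union_disjoint) auto
  also have "\<dots> = PP L * PP R" unfolding PP_def prod_shift by (simp add: nth_append)
  finally show ?thesis .
qed

lemma NN_append:
  assumes "length uL = length L" "length uR = length R"
  shows "NN (L @ R) (uL @ uR) = NN L uL * PP R + NN R uR * PP L"
proof -
  let ?l = "length L" and ?r = "length R"
  let ?fs = "L @ R" and ?us = "uL @ uR"
  define T where "T i = smult (?us ! i) (\<Prod>k\<in>{..<?l + ?r} - {i}. ?fs ! k)" for i
  have "NN ?fs ?us = (\<Sum>i\<in>{..<?l} \<union> {?l..<?l + ?r}. T i)"
    unfolding NN_def T_def by (intro sum.cong) auto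
  also have "\<dots> = (\<Sum>i<?l. T i) + (\<Sum>i\<in>{?l..<?l + ?r}. T i)"
    by (rule sum.union_disjoint) auto
  also have "(\<Sum>i<?l. T i) = NN L uL * PP R"
  proof -
    have "T i = smult (uL ! i) (\<Prod>k\<in>{..<?l} - {i}. L ! k) * PP R" if i: "i < ?l" for i
    proof -
      have se: "{..<?l + ?r} - {i} = ({..<?l} - {i}) \<union> {?l..<?l + ?r}" using i by auto
      have "(\<Prod>k\<in>{..<?l + ?r} - {i}. ?fs ! k) =
          (\<Prod>k\<in>{..<?l} - {i}. ?fs ! k) * (\<Prod>k\<in>{?l..<?l + ?r}. ?fs ! k)"
        unfolding se by (rule prod.union_disjoint) auto
      also have "\<dots> = (\<Prod>k\<in>{..<?l} - {i}. L ! k) * PP R"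
        unfolding prod_shift PP_def by (simp add: nth_append)
      finally show ?thesis using i assms by (simp add: T_def nth_append mult_smult_left)
    qed
    then show ?thesis unfolding NN_def sum_distrib_right by simp
  qed
  also have "(\<Sum>i\<in>{?l..<?l + ?r}. T i) = NN R uR * PP L"
  proof -
    have "T (j + ?l) = smult (uR ! j) (\<Prod>k\<in>{..<?r} - {j}. R ! k) * PP L" if j: "j < ?r" for j
    proof -
      have se: "{..<?l + ?r} - {?l + j} = {..<?l} \<union> ({?l..<?l + ?r} - {?l + j})" using j by auto
      have "(\<Prod>k\<in>{..<?l + ?r} - {?l + j}. ?fs ! k) =
          (\<Prod>k<?l. ?fs ! k) * (\<Prod>k\<in>{?l..<?l + ?r} - {?l + j}. ?fs ! k)"
        unfolding se by (rule prod.union_disjoint) auto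
      also have "\<dots> = PP L * (\<Prod>k\<in>{..<?r} - {j}. R ! k)"
        unfolding prod_shift_rm PP_def by (simp add: nth_append)
      finally show ?thesis using j assms by (simp add: T_def nth_append mult_smult_left add.commute mult.commute)
    qed
    then show ?thesis unfolding sum_shift NN_def sum_distrib_right by simp
  qed
  finally show ?thesis .
qed

lemma degree_PP: "(\<And>f. f \<in> set fs \<Longrightarrow> degree f \<le> 1) \<Longrightarrow> degree (PP fs) \<le> length fs"
proof -
  assume d: "\<And>f. f \<in> set fs \<Longrightarrow> degree f \<le> 1"
  have "degree (PP fs) \<le> (\<Sum>k<length fs. degree (fs ! k))"
    unfolding PP_def using degree_prod_sum_le[of "{..<length fs}" "\<lambda>k. fs ! k"] by (simp add: o_def)
  also have "\<dots> \<le> (\<Sum>k<length fs. 1)" by (intro sum_mono, rule d) auto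
  finally show ?thesis by simp
qed

lemma degree_NN:
  assumes d: "\<And>f. f \<in> set fs \<Longrightarrow> degree f \<le> 1" and ne: "fs \<noteq> []"
  shows "degree (NN fs us) < length fs"
proof -
  have "degree (NN fs us) \<le> length fs - 1" unfolding NN_def
  proof (intro degree_sum_le)
    fix i assume "i \<in> {..<length fs}"
    have "degree (\<Prod>k\<in>{..<length fs} - {i}. fs ! k) \<le> (\<Sum>k\<in>{..<length fs} - {i}. degree (fs ! k))"
      using degree_prod_sum_le[of "{..<length fs} - {i}" "\<lambda>k. fs ! k"] by (simp add: o_def)
    also have "\<dots> \<le> (\<Sum>k\<in>{..<length fs} - {i}. 1)" by (intro sum_mono, rule d) auto
    also have "\<dots> = length fs - 1" using \<open>i \<in> _\<close> by simp
    finally show "degree (smult (us ! i) (\<Prod>k\<in>{..<length fs} - {i}. fs ! k)) \<le> length fs - 1"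
      using degree_smult_le order_trans by blast
  qed simp
  then show ?thesis using ne by (cases fs) auto
qed

lemma Poly_cl_NN:
  assumes "\<And>f. f \<in> set fs \<Longrightarrow> degree f \<le> 1"
  shows "Poly (cl (length fs) (NN fs us)) = NN fs us"
proof (cases "fs = []")
  case True then show ?thesis by (simp add: NN_def cl_def)
next
  case False then show ?thesis using degree_NN[OF assms] by (simp add: Poly_cl)
qed

lemma tree_cost:
  assumes m: "2 \<le> m" and l: "l = m div 2" and r: "r = m - l"
    and b: "A \<le> 33 * l * (clog l + 1)^2" "B \<le> 33 * r * (clog r + 1)^2" "C \<le> 33 * m * (clog m + 1)"
  shows "A + B + C \<le> 33 * m * (clog m + 1)^2"
proof -
  define c where "c = clog ((m + 1) div 2)"
  have cm: "clog m = Suc c" using clog_half[OF m] by (simp add: c_def)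
  have rr: "r = (m + 1) div 2" using r l by simp
  have cr: "clog r = c" using rr by (simp add: c_def)
  have cl: "clog l \<le> c" unfolding cr[symmetric] by (rule clog_mono) (simp add: l r)
  have X: "(clog l + 1)^2 \<le> (c + 1)^2" using cl by (simp add: power_mono)
  have A: "A \<le> 33 * l * (c + 1)^2" using b(1) mult_le_mono2[OF X, of "33 * l"] by linarith
  have B: "B \<le> 33 * r * (c + 1)^2" using b(2) cr by simp
  have lr: "l + r = m" using l r by simp
  have "33 * m * (c + 1)^2 = 33 * l * (c + 1)^2 + 33 * r * (c + 1)^2"
    unfolding lr[symmetric] by (simp add: algebra_simps)
  then have "A + B \<le> 33 * m * (c + 1)^2" using A B by linarith
  moreover have "C \<le> 33 * m * (c + 2)" using b(3) cm by simp
  ultimately have "A + B + C \<le> 33 * m * ((c + 1)^2 + (c + 2))" by (simp add: algebra_simps)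
  also have "\<dots> \<le> 33 * m * (c + 2)^2" by (intro mult_le_mono2) (simp add: power2_eq_square algebra_simps)
  finally show ?thesis using cm by simp
qed

lemma ptree:
  "length fs = m \<Longrightarrow> (\<forall>f\<in>set fs. degree f \<le> 1) \<Longrightarrow>
     rz m m (33 * m * (clog m + 1)^2) (\<lambda>us. cl m (NN fs us))"
proof (induction m arbitrary: fs rule: less_induct)
  case (less m)
  consider "m = 0" | "m = 1" | "2 \<le> m" by linarith
  then show ?case
  proof cases
    case 1
    have "rz m m 0 (\<lambda>us. cl m (NN fs us))" by (rule rz_selfun) (use 1 in auto)
    then show ?thesis by (rule rz_mono) simp
  next
    case 2
    then obtain f where fs: "fs = [f]" using less.prems by (cases fs) auto
    have "rz 1 1 0 (\<lambda>us. cl 1 (NN fs us))" using rz_id[of 1]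
    proof (rule rz_cong)
      fix us :: "complex list" assume "length us = 1"
      then obtain u where "us = [u]" by (cases us) (auto simp: length_Suc_conv)
      then show "cl 1 (NN fs us) = us" by (simp add: fs NN_def cl_def)
    qed simp
    then have "rz 1 1 (33 * 1 * (clog 1 + 1)^2) (\<lambda>us. cl 1 (NN fs us))" by (rule rz_mono) simp
    then show ?thesis using 2 by simp
  next
    case 3
    define l where "l = m div 2"
    define r where "r = m - l"
    define L where "L = take l fs"
    define R where "R = drop l fs"
    have lm: "l < m" "r < m" "l + r = m" using 3 by (auto simp: l_def r_def)
    have lL: "length L = l" "length R = r" using less.prems lm by (auto simp: L_def R_def)
    have dL: "\<forall>f\<in>set L. degree f \<le> 1" "\<forall>f\<in>set R. degree f \<le> 1"
      using less.prems by (auto simp: L_def R_def dest: in_set_takeD in_set_dropD)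
    have fsLR: "fs = L @ R" by (simp add: L_def R_def)
    have IL: "rz l l (33 * l * (clog l + 1)^2) (\<lambda>us. cl l (NN L us))"
      using less.IH[OF lm(1) lL(1) dL(1)] .
    have IR: "rz r r (33 * r * (clog r + 1)^2) (\<lambda>us. cl r (NN R us))"
      using less.IH[OF lm(2) lL(2) dL(2)] .
    have A: "rz (l + r) (l + r) (33 * l * (clog l + 1)^2 + 33 * r * (clog r + 1)^2)
               (\<lambda>us. cl l (NN L (take l us)) @ cl r (NN R (drop l us)))"
      by (rule rz_par[OF IL IR])
    have tk: "rz (l + r) l 0 (\<lambda>ys. take l ys)"
      by (rule rz_selfun, rule disjI1, rule_tac x=i in exI) auto
    have dr: "rz (l + r) r 0 (\<lambda>ys. drop l ys)"
      by (rule rz_selfun, rule disjI1, rule_tac x="l+i" in exI) auto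
    have p1: "rz l m (pmc m) (\<lambda>a. cl m (Poly a * PP R))"
      by (rule pm[where lb="r + 1"]) (use degree_PP[of R] dL lL lm in auto)
    have p2: "rz r m (pmc m) (\<lambda>a. cl m (Poly a * PP L))"
      by (rule pm[where lb="l + 1"]) (use degree_PP[of L] dL lL lm in auto)
    have B: "rz (l + r) m ((0 + pmc m) + (0 + pmc m) + m)
       (\<lambda>ys. map (\<lambda>i. cl m (Poly (take l ys) * PP R) ! i + cl m (Poly (drop l ys) * PP L) ! i) [0..<m])"
      by (rule rz_addf[OF rz_comp[OF tk p1] rz_comp[OF dr p2]])
    have AB: "rz m m (33 * l * (clog l + 1)^2 + 33 * r * (clog r + 1)^2 + ((0 + pmc m) + (0 + pmc m) + m))
       (\<lambda>us. (\<lambda>ys. map (\<lambda>i. cl m (Poly (take l ys) * PP R) ! i + cl m (Poly (drop l ys) * PP L) ! i) [0..<m])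
              (cl l (NN L (take l us)) @ cl r (NN R (drop l us))))"
      using rz_comp[OF A B] lm by simp
    show ?thesis
    proof (rule rz_cong[OF AB])
      fix us :: "complex list" assume us: "length us = m"
      have e1: "Poly (cl l (NN L (take l us))) = NN L (take l us)"
        using Poly_cl_NN[of L "take l us"] dL lL by simp
      have e2: "Poly (cl r (NN R (drop l us))) = NN R (drop l us)"
        using Poly_cl_NN[of R "drop l us"] dL lL by simp
      have "NN fs us = NN L (take l us) * PP R + NN R (drop l us) * PP L"
        unfolding fsLR using NN_append[of "take l us" L "drop l us" R] us lL lm
        by (simp add: append_take_drop_id)
      then show "cl m (NN fs us) = map (\<lambda>i. cl m (Poly (take l (cl l (NN L (take l us)) @ cl r (NN R (drop l us)))) * PP R) ! i
             + cl m (Poly (drop l (cl l (NN L (take l us)) @ cl r (NN R (drop l us)))) * PP L) ! i) [0..<m]"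
      proof -
        have t1: "take l (cl l (NN L (take l us)) @ cl r (NN R (drop l us))) = cl l (NN L (take l us))" by simp
        have t2: "drop l (cl l (NN L (take l us)) @ cl r (NN R (drop l us))) = cl r (NN R (drop l us))" by simp
        show ?thesis unfolding t1 t2 e1 e2 using \<open>NN fs us = _\<close>
          by (auto intro!: nth_equalityI)
      qed
    next
      have "pmc m \<le> 16 * m * (clog m + 1)" using pmc_bound[of m] 3 by simp
      then have "(0 + pmc m) + (0 + pmc m) + m \<le> 33 * m * (clog m + 1)" by (simp add: algebra_simps)
      then show "33 * l * (clog l + 1)^2 + 33 * r * (clog r + 1)^2 + ((0 + pmc m) + (0 + pmc m) + m)
            \<le> 33 * m * (clog m + 1)^2"
        by (rule tree_cost[OF 3 l_def r_def order_refl order_refl])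
    qed
  qed
qed



definition eqn :: "nat \<Rightarrow> complex poly \<Rightarrow> complex poly \<Rightarrow> bool" where
  "eqn e p q \<longleftrightarrow> (\<forall>k<e. coeff p k = coeff q k)"

lemma eqn_refl[simp]: "eqn e p p" by (simp add: eqn_def)
lemma eqn_sym: "eqn e p q \<Longrightarrow> eqn e q p" by (simp add: eqn_def)
lemma eqn_trans: "eqn e p q \<Longrightarrow> eqn e q s \<Longrightarrow> eqn e p s" by (simp add: eqn_def)

lemma eqn_mult: "eqn e p q \<Longrightarrow> eqn e (p * s) (q * s)"
  unfolding eqn_def coeff_mult by (auto intro!: sum.cong)

lemma eqn_mult2: "eqn e p q \<Longrightarrow> eqn e (s * p) (s * q)"
  using eqn_mult[of e p q s] by (simp add: mult.commute)

lemma eqn_add: "eqn e p q \<Longrightarrow> eqn e p' q' \<Longrightarrow> eqn e (p + p') (q + q')"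
  by (simp add: eqn_def)

lemma eqn_cl: "eqn e p q \<Longrightarrow> cl e p = cl e q"
  by (auto simp: eqn_def cl_def)

lemma eqn_trunc: "eqn e (Poly (cl e p)) p"
  by (auto simp: eqn_def cl_def nth_default_def)

lemma inv_exists: "coeff P 0 = 1 \<Longrightarrow> \<exists>R. eqn e (P * R) 1"
proof (induction e)
  case 0 then show ?case by (simp add: eqn_def)
next
  case (Suc e)
  then obtain R where R: "eqn e (P * R) 1" by blast
  define c where "c = coeff (P * R) e - coeff 1 e"
  define R' where "R' = R - monom c e"
  have "coeff (P * R') k = coeff (P * R) k - (if k < e then 0 else c * coeff P (k - e))" for k
    by (simp add: R'_def right_diff_distrib coeff_monom_mult mult.commute[of P "monom c e"])
  then have "eqn (Suc e) (P * R') 1" using R Suc.prems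
    by (auto simp: eqn_def c_def less_Suc_eq)
  then show ?case by blast
qed

definition rv :: "nat \<Rightarrow> complex poly \<Rightarrow> complex poly" where
  "rv k p = Poly (rev (cl k p))"

lemma coeff_rv: "coeff (rv k p) i = (if i < k then coeff p (k - 1 - i) else 0)"
  by (simp add: rv_def nth_default_def cl_def rev_nth)

lemma poly_lt: "degree p < k \<Longrightarrow> poly p (z::complex) = (\<Sum>i<k. coeff p i * z ^ i)"
proof -
  assume d: "degree p < k"
  have "poly p z = (\<Sum>i\<le>degree p. coeff p i * z ^ i)" by (simp add: poly_altdef)
  also have "\<dots> = (\<Sum>i<k. coeff p i * z ^ i)"
    by (rule sum.mono_neutral_left) (use d in \<open>auto simp: coeff_eq_0\<close>)
  finally show ?thesis .
qed

lemma degree_rv: "degree (rv k p) < max 1 k"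
proof (cases "k = 0")
  case True then show ?thesis by (simp add: rv_def cl_def)
next
  case False
  have "degree (rv k p) \<le> k - 1" by (rule degree_le) (auto simp: coeff_rv)
  then show ?thesis using False by simp
qed

lemma poly_rv:
  assumes "degree p < k" "z \<noteq> 0"
  shows "poly (rv k p) z = z ^ (k - 1) * poly p (1 / z)"
proof (cases "k = 0")
  case True then show ?thesis using assms by simp
next
  case False
  have "poly (rv k p) z = (\<Sum>i<k. coeff (rv k p) i * z ^ i)"
    using degree_rv[of k p] False by (intro poly_lt) simp
  also have "\<dots> = (\<Sum>i<k. coeff p (k - 1 - i) * z ^ i)" by (simp add: coeff_rv)
  also have "\<dots> = (\<Sum>i<k. coeff p i * z ^ (k - 1 - i))"
    using sum.nat_diff_reindex[of "\<lambda>i. coeff p (k - 1 - i) * z ^ i" k] by simp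
  also have "\<dots> = (\<Sum>i<k. z ^ (k - 1) * (coeff p i * (1 / z) ^ i))"
  proof (intro sum.cong refl)
    fix i assume "i \<in> {..<k}"
    then have "z ^ (k - 1) = z ^ (k - 1 - i) * z ^ i" by (simp flip: power_add)
    then show "coeff p i * z ^ (k - 1 - i) = z ^ (k - 1) * (coeff p i * (1 / z) ^ i)"
      using assms(2) by (simp add: power_one_over field_simps)
  qed
  also have "\<dots> = z ^ (k - 1) * poly p (1 / z)"
    using poly_lt[OF assms(1)] by (simp add: sum_distrib_left)
  finally show ?thesis .
qed

lemma poly_eq_nz: "(\<And>z. z \<noteq> 0 \<Longrightarrow> poly p z = poly (q::complex poly) z) \<Longrightarrow> p = q"
proof (rule ccontr)
  assume h: "\<And>z. z \<noteq> 0 \<Longrightarrow> poly p z = poly q z" and ne: "p \<noteq> q"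
  then have "p - q \<noteq> 0" by simp
  then have "finite {z. poly (p - q) z = 0}" by (rule poly_roots_finite)
  moreover have "{z::complex. z \<noteq> 0} \<subseteq> {z. poly (p - q) z = 0}" using h by auto
  moreover have "infinite {z::complex. z \<noteq> 0}"
  proof
    assume "finite {z::complex. z \<noteq> 0}"
    then have "finite (insert 0 {z::complex. z \<noteq> 0})" by simp
    moreover have "insert 0 {z::complex. z \<noteq> 0} = UNIV" by auto
    ultimately show False using infinite_UNIV_char_0[where 'a=complex] by simp
  qed
  ultimately show False using finite_subset by blast
qed

lemma red_math:
  fixes p M :: "complex poly"
  assumes dp: "degree p < m" and dM: "degree M = d" and mon: "coeff M d = 1"
    and d1: "1 \<le> d" and dm: "d < m" and R: "eqn (m - d) (rv (d + 1) M * R) 1"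
  shows "cl (m - d) (rv m p * R) = rev (cl (m - d) (p div M))"
    and "degree (p div M) < m - d"
    and "p mod M = p - (p div M) * M"
proof -
  define e where "e = m - d"
  define q where "q = p div M"
  define r where "r = p mod M"
  have M0: "M \<noteq> 0" using mon by auto
  have pqr: "p = q * M + r" by (simp add: q_def r_def)
  have dr: "degree r < d"
    using degree_mod_less[OF M0, of p] d1 dM by (auto simp: r_def)
  show dq: "degree (p div M) < m - d"
  proof (cases "q = 0")
    case True then show ?thesis using dm by (simp add: q_def)
  next
    case False
    have "degree (q * M) = degree q + d" using degree_mult_eq[OF False M0] dM by simp
    moreover have "degree (q * M) < m"
    proof -
      have "q * M = p - r" using pqr by simp
      then have "degree (q * M) \<le> max (degree p) (degree r)" using degree_diff_le_max by metis
      then show ?thesis using dp dr dm by linarith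
    qed
    ultimately show ?thesis by (simp add: q_def)
  qed
  show "p mod M = p - (p div M) * M"
  proof -
    have "p div M * M + p mod M = p" by (rule div_mult_mod_eq)
    then show ?thesis by (simp add: eq_diff_eq add.commute)
  qed
  have e1: "1 \<le> e" using dm by (simp add: e_def)
  have dq': "degree q < e" using dq by (simp add: q_def e_def)
  have key: "rv m p = rv e q * rv (d + 1) M + monom 1 e * rv d r"
  proof (rule poly_eq_nz)
    fix z :: complex assume z: "z \<noteq> 0"
    have "poly (rv m p) z = z ^ (m - 1) * poly p (1 / z)" by (rule poly_rv[OF dp z])
    also have "\<dots> = z ^ (m - 1) * poly q (1 / z) * poly M (1 / z) + z ^ (m - 1) * poly r (1 / z)"
      using pqr by (metis distrib_left mult.assoc poly_add poly_mult)
    also have "\<dots> = (z ^ (e - 1) * poly q (1 / z)) * (z ^ d * poly M (1 / z))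
         + z ^ e * (z ^ (d - 1) * poly r (1 / z))"
    proof -
      have zm1: "z ^ (m - 1) = z ^ (e - 1) * z ^ d" using e1 dm by (simp add: e_def flip: power_add)
      have zm2: "z ^ (m - 1) = z ^ e * z ^ (d - 1)" using d1 dm by (simp add: e_def flip: power_add)
      have a: "z ^ (m - 1) * poly q (1 / z) * poly M (1 / z) = (z ^ (e - 1) * poly q (1 / z)) * (z ^ d * poly M (1 / z))"
        unfolding zm1 by (simp add: mult_ac)
      have b: "z ^ (m - 1) * poly r (1 / z) = z ^ e * (z ^ (d - 1) * poly r (1 / z))"
        unfolding zm2 by (simp add: mult_ac)
      show ?thesis unfolding a b ..
    qed
    also have "\<dots> = poly (rv e q) z * poly (rv (d + 1) M) z + z ^ e * poly (rv d r) z"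
      using poly_rv[OF dq' z] poly_rv[of M "d + 1", OF _ z] poly_rv[OF dr z] dM by simp
    finally show "poly (rv m p) z = poly (rv e q * rv (d + 1) M + monom 1 e * rv d r) z"
      by (simp add: poly_monom)
  qed
  have "eqn e (rv m p) (rv e q * rv (d + 1) M)"
    unfolding key eqn_def by (simp add: coeff_monom_mult)
  then have "eqn e (rv m p * R) (rv e q * rv (d + 1) M * R)" by (rule eqn_mult)
  then have "eqn e (rv m p * R) (rv e q * (rv (d + 1) M * R))" by (simp only: mult.assoc)
  moreover have "eqn e (rv e q * (rv (d + 1) M * R)) (rv e q * 1)"
    using R unfolding e_def[symmetric] by (rule eqn_mult2)
  ultimately have "eqn e (rv m p * R) (rv e q)" using eqn_trans by simp
  then have "cl e (rv m p * R) = cl e (rv e q)" by (rule eqn_cl)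
  also have "\<dots> = rev (cl e q)"
    by (auto simp: cl_def coeff_rv rev_nth intro!: nth_equalityI)
  finally show "cl (m - d) (rv m p * R) = rev (cl (m - d) (p div M))" by (simp add: e_def q_def)
qed



lemma rz_rev: "rz m m 0 rev"
  by (rule rz_selfun, rule disjI1, rule_tac x="m - 1 - i" in exI) (auto simp: rev_nth)

lemma rz_take: "d \<le> m \<Longrightarrow> rz m d 0 (take d)"
  by (rule rz_selfun, rule disjI1, rule_tac x="i" in exI) auto

lemma red:
  assumes dM: "degree M = d" and mon: "coeff M d = 1" and d1: "1 \<le> d" and dm: "d < m"
  shows "rz m d (pmc (2 * m) + pmc m + d) (\<lambda>a. cl d (Poly a mod M))"
proof -
  define e where "e = m - d"
  have c0: "coeff (rv (d + 1) M) 0 = 1" using mon by (simp add: coeff_rv)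
  obtain R where R: "eqn e (rv (d + 1) M * R) 1" using inv_exists[OF c0] by blast
  define R' where "R' = Poly (cl e R)"
  have e1: "1 \<le> e" using dm by (simp add: e_def)
  have dR': "degree R' < e"
  proof -
    have "degree R' \<le> e - 1" unfolding R'_def by (rule degree_le) (auto simp: cl_def nth_default_def)
    then show ?thesis using e1 by simp
  qed
  have S2: "rz m e (pmc (2 * m)) (\<lambda>b. cl e (Poly b * R'))"
    by (rule pm[OF dR']) (use dm in \<open>auto simp: e_def\<close>)
  have S4: "rz e d (pmc m) (\<lambda>c. cl d (Poly c * M))"
    by (rule pm[where lb="d+1"]) (use dm dM in \<open>auto simp: e_def\<close>)
  define G where "G a = cl d (Poly (rev (cl e (Poly (rev a) * R'))) * M)" for a
  have g: "rz m d (0 + pmc (2 * m) + 0 + pmc m) G"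
    unfolding G_def by (rule rz_comp[OF rz_comp[OF rz_comp[OF rz_rev S2] rz_rev] S4])
  have all: "rz m d (0 + (0 + pmc (2 * m) + 0 + pmc m) + d) (\<lambda>a. map (\<lambda>i. take d a ! i - G a ! i) [0..<d])"
    by (rule rz_subf[OF rz_take g]) (use dm in simp)
  show ?thesis
  proof (rule rz_cong[OF all])
    fix a :: "complex list" assume a: "length a = m"
    define p where "p = Poly a"
    have ca: "cl m p = a" using a by (simp add: p_def cl_Poly)
    have dp: "degree p < m"
    proof -
      have "degree p \<le> m - 1" unfolding p_def by (rule degree_le) (use a in \<open>auto simp: nth_default_def\<close>)
      then show ?thesis using dm by linarith
    qed
    note rm = red_math[OF dp dM mon d1 dm R[unfolded e_def]]
    have "cl e (Poly (rev a) * R') = cl e (rv m p * R)"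
    proof -
      have "Poly (rev a) = rv m p" using ca by (simp add: rv_def)
      moreover have "eqn e (rv m p * R') (rv m p * R)" unfolding R'_def by (rule eqn_mult2[OF eqn_trunc])
      ultimately show ?thesis by (simp add: eqn_cl)
    qed
    also have "\<dots> = rev (cl e (p div M))" using rm(1) by (simp add: e_def)
    finally have "Poly (rev (cl e (Poly (rev a) * R'))) = p div M"
      using rm(2) by (simp add: Poly_cl e_def)
    then have G: "G a = cl d ((p div M) * M)" by (simp add: G_def)
    show "cl d (Poly a mod M) = map (\<lambda>i. take d a ! i - G a ! i) [0..<d]"
    proof -
      have pmd: "Poly a mod M = Poly a - Poly a div M * M" using rm(3) by (simp add: p_def)
      show ?thesis using a dm unfolding G pmd by (auto simp: cl_def nth_default_def p_def intro!: nth_equalityI)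
    qed
  qed simp
qed

definition lin :: "complex \<Rightarrow> complex poly" where "lin t = [:-t, 1:]"

definition MP :: "complex list \<Rightarrow> complex poly" where "MP ts = PP (map lin ts)"

lemma MP_Cons: "MP (t # ts) = lin t * MP ts"
  using PP_append[of "[lin t]" "map lin ts"] by (simp add: MP_def PP_def)

lemma MP_props: "degree (MP ts) = length ts \<and> coeff (MP ts) (length ts) = 1"
proof (induction ts)
  case Nil then show ?case by (simp add: MP_def PP_def)
next
  case (Cons t ts)
  have n0: "MP ts \<noteq> 0" using Cons by auto
  have "degree (MP (t # ts)) = 1 + degree (MP ts)" unfolding MP_Cons
    by (subst degree_mult_eq) (auto simp: lin_def n0)
  moreover have "lead_coeff (MP (t # ts)) = 1"
  proof -
    have "lead_coeff (MP (t # ts)) = lead_coeff (lin t) * lead_coeff (MP ts)"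
      unfolding MP_Cons by (rule lead_coeff_mult)
    moreover have "lead_coeff (lin t) = 1" by (simp add: lin_def)
    ultimately show ?thesis using Cons by simp
  qed
  ultimately show ?case using Cons by simp
qed

lemma MP_root: "t \<in> set ts \<Longrightarrow> poly (MP ts) t = 0"
  by (induction ts) (auto simp: MP_Cons lin_def)

lemma tree_costK:
  fixes K :: nat
  assumes m: "2 \<le> m" and l: "l = m div 2" and r: "r = m - l"
    and b: "A \<le> K * l * (clog l + 1)^2" "B \<le> K * r * (clog r + 1)^2" "C \<le> K * m * (clog m + 1)"
  shows "A + B + C \<le> K * m * (clog m + 1)^2"
proof -
  define c where "c = clog ((m + 1) div 2)"
  have cm: "clog m = Suc c" using clog_half[OF m] by (simp add: c_def)
  have rr: "r = (m + 1) div 2" using r l by simp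
  have cr: "clog r = c" using rr by (simp add: c_def)
  have cl: "clog l \<le> c" unfolding cr[symmetric] by (rule clog_mono) (simp add: l r)
  have X: "(clog l + 1)^2 \<le> (c + 1)^2" using cl by (simp add: power_mono)
  have A: "A \<le> K * l * (c + 1)^2" using b(1) mult_le_mono2[OF X, of "K * l"] by linarith
  have B: "B \<le> K * r * (c + 1)^2" using b(2) cr by simp
  have lr: "l + r = m" using l r by simp
  have "K * m * (c + 1)^2 = K * l * (c + 1)^2 + K * r * (c + 1)^2"
    unfolding lr[symmetric] by (simp add: algebra_simps)
  then have AB: "A + B \<le> K * m * (c + 1)^2" using A B by linarith
  have C: "C \<le> K * m * (c + 2)" using b(3) cm by simp
  have "K * m * (c + 1)^2 + K * m * (c + 2) \<le> K * m * (c + 2)^2"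
  proof -
    have "(c + 1)^2 + (c + 2) \<le> (c + 2)^2" by (simp add: power2_eq_square algebra_simps)
    then have "K * m * ((c + 1)^2 + (c + 2)) \<le> K * m * (c + 2)^2" by (rule mult_le_mono2)
    then show ?thesis by (simp add: algebra_simps)
  qed
  then have "A + B + C \<le> K * m * (c + 2)^2" using AB C by linarith
  then show ?thesis using cm by simp
qed

lemma poly_mod_root: "poly M t = 0 \<Longrightarrow> poly (p mod M) t = poly p (t::complex)"
proof -
  assume "poly M t = 0"
  moreover have "p = p div M * M + p mod M" by simp
  then have "poly p t = poly (p div M) t * poly M t + poly (p mod M) t" by (metis poly_add poly_mult)
  ultimately show ?thesis by simp
qed

lemma pmc2: "1 \<le> m \<Longrightarrow> pmc (2 * m) \<le> 64 * m * (clog m + 1)"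
proof -
  assume m: "1 \<le> m"
  have "2 * m \<le> 2 ^ (clog m + 1)" using clog_le[of m] by simp
  then have c2: "clog (2 * m) \<le> clog m + 1" by (rule clog_least)
  have "pmc (2 * m) \<le> 16 * (2 * m) * (clog (2 * m) + 1)" using pmc_bound[of "2 * m"] m by simp
  also have "\<dots> \<le> 16 * (2 * m) * (clog m + 2)" using c2 by (intro mult_le_mono2) simp
  also have "\<dots> \<le> 64 * m * (clog m + 1)" by (simp add: algebra_simps)
  finally show ?thesis .
qed

lemma evtree:
  "length ts = m \<Longrightarrow> rz m m (257 * m * (clog m + 1)^2) (\<lambda>a. map (poly (Poly a)) ts)"
proof (induction m arbitrary: ts rule: less_induct)
  case (less m)
  consider "m = 0" | "m = 1" | "2 \<le> m" by linarith
  then show ?case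
  proof cases
    case 1
    have "rz m m 0 (\<lambda>a. map (poly (Poly a)) ts)" by (rule rz_selfun) (use 1 less.prems in auto)
    then show ?thesis by (rule rz_mono) simp
  next
    case 2
    then obtain t where ts: "ts = [t]" using less.prems by (cases ts) auto
    have "rz 1 1 0 (\<lambda>a. map (poly (Poly a)) ts)" using rz_id[of 1]
    proof (rule rz_cong)
      fix a :: "complex list" assume "length a = 1"
      then obtain u where "a = [u]" by (cases a) (auto simp: length_Suc_conv)
      then show "map (poly (Poly a)) ts = a" by (simp add: ts)
    qed simp
    then have "rz 1 1 (257 * 1 * (clog 1 + 1)^2) (\<lambda>a. map (poly (Poly a)) ts)" by (rule rz_mono) simp
    then show ?thesis using 2 by simp
  next
    case 3
    define l where "l = m div 2"
    define r where "r = m - l"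
    define L where "L = take l ts"
    define R where "R = drop l ts"
    have lm: "l < m" "r < m" "l + r = m" "1 \<le> l" "1 \<le> r" using 3 by (auto simp: l_def r_def)
    have lL: "length L = l" "length R = r" using less.prems lm by (auto simp: L_def R_def)
    have tsLR: "ts = L @ R" by (simp add: L_def R_def)
    have IL: "rz l l (257 * l * (clog l + 1)^2) (\<lambda>a. map (poly (Poly a)) L)"
      using less.IH[OF lm(1) lL(1)] .
    have IR: "rz r r (257 * r * (clog r + 1)^2) (\<lambda>a. map (poly (Poly a)) R)"
      using less.IH[OF lm(2) lL(2)] .
    have A1: "rz m l (pmc (2 * m) + pmc m + l) (\<lambda>a. cl l (Poly a mod MP L))"
      by (rule red) (use MP_props[of L] lL lm in auto)
    have A2: "rz m r (pmc (2 * m) + pmc m + r) (\<lambda>a. cl r (Poly a mod MP R))"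
      by (rule red) (use MP_props[of R] lL lm in auto)
    have B: "rz (l + r) (l + r) (257 * l * (clog l + 1)^2 + 257 * r * (clog r + 1)^2)
        (\<lambda>ys. map (poly (Poly (take l ys))) L @ map (poly (Poly (drop l ys))) R)"
      by (rule rz_par[OF IL IR])
    have AB: "rz m (l + r) ((pmc (2 * m) + pmc m + l) + (pmc (2 * m) + pmc m + r) +
                 (257 * l * (clog l + 1)^2 + 257 * r * (clog r + 1)^2))
       (\<lambda>a. (\<lambda>ys. map (poly (Poly (take l ys))) L @ map (poly (Poly (drop l ys))) R)
              (cl l (Poly a mod MP L) @ cl r (Poly a mod MP R)))"
      by (rule rz_comp[OF rz_app[OF A1 A2] B])
    have modeq: "poly (Poly (cl k (p mod MP X))) t = poly p t"
      if "length X = k" "1 \<le> k" "t \<in> set X" for X k p t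
    proof -
      have M0: "MP X \<noteq> 0" and dM: "degree (MP X) = k" using MP_props[of X] that by auto
      have "degree (p mod MP X) < k"
        using degree_mod_less[OF M0, of p] dM that by auto
      then have "Poly (cl k (p mod MP X)) = p mod MP X" by (rule Poly_cl)
      then show ?thesis using poly_mod_root[OF MP_root[OF that(3)]] by simp
    qed
    have "rz m m ((pmc (2 * m) + pmc m + l) + (pmc (2 * m) + pmc m + r) +
                 (257 * l * (clog l + 1)^2 + 257 * r * (clog r + 1)^2)) (\<lambda>a. map (poly (Poly a)) ts)"
    proof (rule rz_cong[OF AB[unfolded lm(3)]])
      fix a :: "complex list" assume "length a = m"
      have t1: "take l (cl l (Poly a mod MP L) @ cl r (Poly a mod MP R)) = cl l (Poly a mod MP L)" by simp
      have t2: "drop l (cl l (Poly a mod MP L) @ cl r (Poly a mod MP R)) = cl r (Poly a mod MP R)" by simp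
      show "map (poly (Poly a)) ts = map (poly (Poly (take l (cl l (Poly a mod MP L) @ cl r (Poly a mod MP R))))) L @
              map (poly (Poly (drop l (cl l (Poly a mod MP L) @ cl r (Poly a mod MP R))))) R"
        unfolding t1 t2 tsLR using modeq[OF lL(1) lm(4)] modeq[OF lL(2) lm(5)] by simp
    qed simp
    moreover have "(pmc (2 * m) + pmc m + l) + (pmc (2 * m) + pmc m + r) +
                 (257 * l * (clog l + 1)^2 + 257 * r * (clog r + 1)^2) \<le> 257 * m * (clog m + 1)^2"
    proof -
      have m1: "1 \<le> m" using 3 by simp
      have "pmc m \<le> pmc (2 * m)" by (rule pmc_mono) simp
      then have "(pmc (2 * m) + pmc m + l) + (pmc (2 * m) + pmc m + r) \<le> 257 * m * (clog m + 1)"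
        using pmc2[OF m1] lm(3) by (simp add: algebra_simps)
      then have "257 * l * (clog l + 1)^2 + 257 * r * (clog r + 1)^2 +
           ((pmc (2 * m) + pmc m + l) + (pmc (2 * m) + pmc m + r)) \<le> 257 * m * (clog m + 1)^2"
        by (intro tree_costK[OF 3 l_def r_def]) simp_all
      then show ?thesis by linarith
    qed
    ultimately show ?thesis by (rule rz_mono)
  qed
qed



lemma poly_NN:
  assumes i: "i < length fs" and z: "poly (fs ! i) z = 0"
  shows "poly (NN fs us) z = us ! i * (\<Prod>k\<in>{..<length fs} - {i}. poly (fs ! k) z)"
proof -
  have "poly (NN fs us) z = (\<Sum>j<length fs. us ! j * (\<Prod>k\<in>{..<length fs} - {j}. poly (fs ! k) z))"
    by (simp add: NN_def poly_sum poly_prod)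
  also have "\<dots> = us ! i * (\<Prod>k\<in>{..<length fs} - {i}. poly (fs ! k) z) +
      (\<Sum>j\<in>{..<length fs} - {i}. us ! j * (\<Prod>k\<in>{..<length fs} - {j}. poly (fs ! k) z))"
    using i by (subst sum.remove[of _ i]) auto
  also have "(\<Sum>j\<in>{..<length fs} - {i}. us ! j * (\<Prod>k\<in>{..<length fs} - {j}. poly (fs ! k) z)) = 0"
  proof (intro sum.neutral ballI)
    fix j assume j: "j \<in> {..<length fs} - {i}"
    have "(\<Prod>k\<in>{..<length fs} - {j}. poly (fs ! k) z) = 0"
      using i j z by (intro prod_zero[of _ _]) (auto intro!: bexI[of _ i])
    then show "us ! j * (\<Prod>k\<in>{..<length fs} - {j}. poly (fs ! k) z) = 0" by simp
  qed
  finally show ?thesis by simp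
qed

lemma coeff_NN: "coeff (NN fs us) i = (\<Sum>j<length fs. us ! j * coeff (\<Prod>k\<in>{..<length fs} - {j}. fs ! k) i)"
  by (simp add: NN_def coeff_sum)

lemma roots_unique:
  fixes p :: "complex poly"
  assumes d: "degree p < length ts" and dist: "distinct ts" and r: "\<And>t. t \<in> set ts \<Longrightarrow> poly p t = 0"
  shows "p = 0"
proof (rule ccontr)
  assume p: "p \<noteq> 0"
  have "set ts \<subseteq> {x. poly p x = 0}" using r by auto
  then have "card (set ts) \<le> card {x. poly p x = 0}"
    by (rule card_mono[OF poly_roots_finite[OF p]])
  also have "\<dots> \<le> degree p" by (rule card_poly_roots_bound[OF p])
  finally show False using d dist by (simp add: distinct_card)
qed

definition geo :: "nat \<Rightarrow> complex \<Rightarrow> complex poly" where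
  "geo n t = Poly (map (\<lambda>j. t ^ j) [0..<n])"

lemma coeff_geo: "coeff (geo n t) j = (if j < n then t ^ j else 0)"
  by (simp add: geo_def nth_default_def)

lemma geo_inv: "eqn n ([:1, -t:] * geo n t) 1"
proof -
  have "[:1, -t:] * geo n t = geo n t + pCons 0 (smult (-t) (geo n t))" by simp
  then show ?thesis unfolding eqn_def
    by (auto simp: coeff_geo coeff_pCons split: nat.splits)
qed

definition tlin :: "complex \<Rightarrow> complex poly" where "tlin t = [:1, -t:]"

lemma eqn_sum: "(\<And>i. i \<in> A \<Longrightarrow> eqn e (f i) (g i)) \<Longrightarrow> eqn e (\<Sum>i\<in>A. f i) (\<Sum>i\<in>A. g i)"
  by (auto simp: eqn_def coeff_sum intro: sum.cong)

lemma VT_math: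
  assumes len: "length us = length ts"
  defines "fs \<equiv> map tlin ts"
  shows "eqn n (PP fs * (\<Sum>i<length ts. smult (us ! i) (geo n (ts ! i)))) (NN fs us)"
proof -
  have "PP fs * (\<Sum>i<length ts. smult (us ! i) (geo n (ts ! i))) =
        (\<Sum>i<length ts. smult (us ! i) (\<Prod>k\<in>{..<length fs} - {i}. fs ! k) * (fs ! i * geo n (ts ! i)))"
    unfolding sum_distrib_left
  proof (intro sum.cong refl)
    fix i assume i: "i \<in> {..<length ts}"
    have "PP fs = fs ! i * (\<Prod>k\<in>{..<length fs} - {i}. fs ! k)"
      unfolding PP_def using i by (subst prod.remove[of _ i]) (auto simp: fs_def)
    then show "PP fs * smult (us ! i) (geo n (ts ! i)) =
        smult (us ! i) (\<Prod>k\<in>{..<length fs} - {i}. fs ! k) * (fs ! i * geo n (ts ! i))"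
      by (simp add: mult_ac)
  qed
  also have "eqn n \<dots> (\<Sum>i<length ts. smult (us ! i) (\<Prod>k\<in>{..<length fs} - {i}. fs ! k) * 1)"
  proof (rule eqn_sum)
    fix i assume "i \<in> {..<length ts}"
    then have "eqn n (fs ! i * geo n (ts ! i)) 1" using geo_inv by (simp add: fs_def tlin_def)
    then show "eqn n (smult (us ! i) (\<Prod>k\<in>{..<length fs} - {i}. fs ! k) * (fs ! i * geo n (ts ! i)))
        (smult (us ! i) (\<Prod>k\<in>{..<length fs} - {i}. fs ! k) * 1)" by (rule eqn_mult2)
  qed
  also have "(\<Sum>i<length ts. smult (us ! i) (\<Prod>k\<in>{..<length fs} - {i}. fs ! k) * 1) = NN fs us"
    by (simp add: NN_def fs_def)
  finally show ?thesis .
qed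



lemma poly_Poly_sum: "length a = n \<Longrightarrow> poly (Poly a) (z::complex) = (\<Sum>j<n. a ! j * z ^ j)"
proof (cases "n = 0")
  case True then show "length a = n \<Longrightarrow> ?thesis" by simp
next
  case False
  assume a: "length a = n"
  have "degree (Poly a) \<le> n - 1" by (rule degree_le) (use a in \<open>auto simp: nth_default_def\<close>)
  then have "degree (Poly a) < n" using False by linarith
  then show ?thesis using poly_lt[of "Poly a" n z] a by (simp add: nth_default_def)
qed

lemma algV:
  assumes "length ts = n"
  shows "rz n n (257 * n * (clog n + 1)^2) (\<lambda>a. map (\<lambda>i. \<Sum>j<n. (ts ! i) ^ j * a ! j) [0..<n])"
  using evtree[OF assms]
proof (rule rz_cong)
  fix a :: "complex list" assume "length a = n"
  then show "map (\<lambda>i. \<Sum>j<n. (ts ! i) ^ j * a ! j) [0..<n] = map (poly (Poly a)) ts"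
    using assms by (auto simp: poly_Poly_sum mult.commute intro!: nth_equalityI)
qed simp

lemma coeff0_PP: "(\<And>f. f \<in> set fs \<Longrightarrow> coeff f 0 = 1) \<Longrightarrow> coeff (PP fs) 0 = 1"
  by (simp add: PP_def poly_0_coeff_0[symmetric] poly_prod)

lemma algVT:
  assumes len: "length ts = n"
  shows "rz n n (33 * n * (clog n + 1)^2 + pmc (2 * n)) (\<lambda>u. map (\<lambda>j. \<Sum>i<n. (ts ! i) ^ j * u ! i) [0..<n])"
proof -
  define fs where "fs = map tlin ts"
  have dfs: "\<forall>f\<in>set fs. degree f \<le> 1" by (auto simp: fs_def tlin_def)
  have "coeff (PP fs) 0 = 1" by (rule coeff0_PP) (auto simp: fs_def tlin_def)
  then obtain Dinv where Dinv: "eqn n (PP fs * Dinv) 1" using inv_exists by blast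
  define D' where "D' = Poly (cl n Dinv)"
  have dD': "degree D' < n + 1"
  proof -
    have "degree D' \<le> n" unfolding D'_def by (rule degree_le) (auto simp: cl_def nth_default_def)
    then show ?thesis by simp
  qed
  have T: "rz n n (33 * n * (clog n + 1)^2) (\<lambda>us. cl n (NN fs us))"
    by (rule ptree) (use len dfs in \<open>auto simp: fs_def\<close>)
  have P: "rz n n (pmc (2 * n)) (\<lambda>a. cl n (Poly a * D'))"
    by (rule pm[OF dD']) auto
  show ?thesis
  proof (rule rz_cong[OF rz_comp[OF T P]])
    fix u :: "complex list" assume u: "length u = n"
    define G where "G = (\<Sum>i<length ts. smult (u ! i) (geo n (ts ! i)))"
    have VT: "eqn n (PP fs * G) (NN fs u)" unfolding G_def fs_def by (rule VT_math) (simp add: u len)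
    have "eqn n (Poly (cl n (NN fs u)) * D') (NN fs u * Dinv)"
    proof -
      have "eqn n (Poly (cl n (NN fs u)) * D') (NN fs u * D')" by (rule eqn_mult[OF eqn_trunc])
      moreover have "eqn n (NN fs u * D') (NN fs u * Dinv)" unfolding D'_def by (rule eqn_mult2[OF eqn_trunc])
      ultimately show ?thesis by (rule eqn_trans)
    qed
    moreover have "eqn n (NN fs u * Dinv) (PP fs * G * Dinv)" by (rule eqn_mult[OF eqn_sym[OF VT]])
    moreover have "PP fs * G * Dinv = G * (PP fs * Dinv)" by (simp add: mult_ac)
    moreover have "eqn n (G * (PP fs * Dinv)) (G * 1)" by (rule eqn_mult2[OF Dinv])
    ultimately have "eqn n (Poly (cl n (NN fs u)) * D') G" by (metis eqn_trans mult_1_right)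
    then have "cl n (Poly (cl n (NN fs u)) * D') = cl n G" by (rule eqn_cl)
    also have "\<dots> = map (\<lambda>j. \<Sum>i<n. (ts ! i) ^ j * u ! i) [0..<n]"
      by (auto simp: cl_def G_def coeff_sum coeff_geo len mult.commute intro!: nth_equalityI)
    finally show "map (\<lambda>j. \<Sum>i<n. (ts ! i) ^ j * u ! i) [0..<n] = cl n (Poly (cl n (NN fs u)) * D')" by simp
  qed simp
qed

lemma algVinv:
  assumes len: "length ts = n" and cs: "length cs = n"
  shows "rz n n (n + 33 * n * (clog n + 1)^2) (\<lambda>y. cl n (NN (map lin ts) (map (\<lambda>i. y ! i * cs ! i) [0..<n])))"
proof -
  have T: "rz n n (33 * n * (clog n + 1)^2) (\<lambda>us. cl n (NN (map lin ts) us))"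
    by (rule ptree) (use len in \<open>auto simp: lin_def\<close>)
  show ?thesis by (rule rz_comp[OF rz_scale[OF cs] T])
qed

lemma algVTinv:
  assumes len: "length ts = n" and cs: "length cs = n"
  shows "rz n n (pmc (2 * n) + 257 * n * (clog n + 1)^2 + n)
    (\<lambda>a. map (\<lambda>i. poly (Poly (cl n (Poly a * PP (map tlin ts)))) (1 / ts ! i) * cs ! i) [0..<n])"
proof -
  have "degree (PP (map tlin ts)) \<le> length (map tlin ts)" by (rule degree_PP) (auto simp: tlin_def)
  then have dD: "degree (PP (map tlin ts)) < n + 1" using len by simp
  have P: "rz n n (pmc (2 * n)) (\<lambda>a. cl n (Poly a * PP (map tlin ts)))"
    by (rule pm[OF dD]) auto
  have E: "rz n n (257 * n * (clog n + 1)^2) (\<lambda>a. map (poly (Poly a)) (map (\<lambda>t. 1 / t) ts))"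
    by (rule evtree) (simp add: len)
  show ?thesis
  proof (rule rz_cong[OF rz_comp[OF rz_comp[OF P E] rz_scale[OF cs]]])
    fix a :: "complex list" assume "length a = n"
    then show "map (\<lambda>i. poly (Poly (cl n (Poly a * PP (map tlin ts)))) (1 / ts ! i) * cs ! i) [0..<n] =
      map (\<lambda>i. map (poly (Poly (cl n (Poly a * PP (map tlin ts))))) (map (\<lambda>t. 1 / t) ts) ! i * cs ! i) [0..<n]"
      using len by (auto intro!: nth_equalityI)
  qed simp
qed



lemma rz_computes:
  assumes "rz n n c F" and "\<And>xs i. length xs = n \<Longrightarrow> i < n \<Longrightarrow> F xs ! i = (\<Sum>j<n. M i j * xs ! j)"
  shows "\<exists>P. computes n (mat_vec n M) P \<and> cost P \<le> c"
proof -
  obtain P where P: "cost P \<le> c" "length (snd P) = n" "\<And>u i. i < n \<Longrightarrow> exec P u i = F (map u [0..<n]) ! i"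
    using assms(1) unfolding rz_def by blast
  have "computes n (mat_vec n M) P" unfolding computes_def
  proof (intro conjI allI impI)
    fix u i assume "unit_vec n u" "i < n"
    then show "exec P u i = mat_vec n M u i" using P(3) assms(2)[of "map u [0..<n]" i]
      by (simp add: mat_vec_def)
  qed (rule P(2))
  then show ?thesis using P(1) by blast
qed

lemma alpha_le:
  assumes "rz n n c F" and "\<And>xs i. length xs = n \<Longrightarrow> i < n \<Longrightarrow> F xs ! i = (\<Sum>j<n. M i j * xs ! j)"
  shows "alpha n M \<le> enat c"
proof -
  obtain P where P: "computes n (mat_vec n M) P" "cost P \<le> c" using rz_computes[OF assms] by blast
  then have "alpha n M \<le> enat (cost P)" unfolding alpha_def by (intro Inf_lower) blast
  then show ?thesis using P(2) by (simp add: order_trans)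
qed

lemma inverse_unique:
  assumes B: "is_inverse n A B" and C: "is_inverse n A C" and i: "i < n" and j: "j < n"
  shows "B i j = C i j"
proof -
  have "B i j = (\<Sum>k<n. B i k * (if k = j then 1 else 0))" using j by (simp add: if_distrib cong: if_cong)
  also have "\<dots> = (\<Sum>k<n. B i k * (\<Sum>l<n. A k l * C l j))"
    using C j unfolding is_inverse_def by (intro sum.cong refl) simp
  also have "\<dots> = (\<Sum>l<n. (\<Sum>k<n. B i k * A k l) * C l j)"
    by (simp add: sum_distrib_left sum_distrib_right mult_ac) (rule sum.swap)
  also have "\<dots> = (\<Sum>l<n. (if i = l then 1 else 0) * C l j)"
    using B i unfolding is_inverse_def by (intro sum.cong refl) simp
  also have "\<dots> = (\<Sum>l<n. if i = l then C l j else 0)" by (intro sum.cong) auto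
  also have "\<dots> = C i j" using i by simp
  finally show ?thesis .
qed

lemma beta_le:
  assumes inv: "is_inverse n M N" and "rz n n c F"
    and "\<And>xs i. length xs = n \<Longrightarrow> i < n \<Longrightarrow> F xs ! i = (\<Sum>j<n. N i j * xs ! j)"
  shows "beta n M \<le> enat c"
proof -
  have invM: "invertible_n n M" using inv by (auto simp: invertible_n_def)
  have mi: "is_inverse n M (mat_inv n M)" unfolding mat_inv_def by (rule someI[of "is_inverse n M", OF inv])
  have "\<And>xs i. length xs = n \<Longrightarrow> i < n \<Longrightarrow> F xs ! i = (\<Sum>j<n. mat_inv n M i j * xs ! j)"
    using assms(3) inverse_unique[OF inv mi] by simp
  then obtain P where P: "computes n (mat_vec n (mat_inv n M)) P" "cost P \<le> c"
    using rz_computes[OF assms(2)] by blast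
  have mem: "enat (cost P) \<in> {enat (cost P) | P. computes n (mat_vec n (mat_inv n M)) P}" using P(1) by blast
  have "beta n M \<le> enat (cost P)" unfolding beta_def if_P[OF invM] by (rule Inf_lower[OF mem])
  then show ?thesis using P(2) by (simp add: order_trans)
qed

lemma is_inverse_transp: "is_inverse n A B \<Longrightarrow> is_inverse n (transp A) (transp B)"
  unfolding is_inverse_def transp_def by (simp add: mult.commute)



definition Pj :: "complex list \<Rightarrow> nat \<Rightarrow> complex poly" where
  "Pj ts j = (\<Prod>k\<in>{..<length ts} - {j}. map lin ts ! k)"

definition wj :: "complex list \<Rightarrow> nat \<Rightarrow> complex" where
  "wj ts j = poly (Pj ts j) (ts ! j)"

definition NV :: "complex list \<Rightarrow> nat \<Rightarrow> nat \<Rightarrow> complex" where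
  "NV ts i j = coeff (Pj ts j) i / wj ts j"

lemma poly_lin[simp]: "poly (lin t) z = z - t" by (simp add: lin_def)
lemma poly_tlin[simp]: "poly (tlin t) z = 1 - t * z" by (simp add: tlin_def)

lemma poly_Pj: "poly (Pj ts j) z = (\<Prod>k\<in>{..<length ts} - {j}. z - ts ! k)"
  by (simp add: Pj_def poly_prod)

lemma poly_Pj_node:
  assumes "i < length ts" "j < length ts"
  shows "poly (Pj ts j) (ts ! i) = (if i = j then wj ts j else 0)"
proof (cases "i = j")
  case False
  then show ?thesis using assms unfolding poly_Pj
    by (auto intro!: prod_zero bexI[of _ i])
qed (simp add: wj_def)

lemma wj_nz: "distinct ts \<Longrightarrow> j < length ts \<Longrightarrow> wj ts j \<noteq> 0"
  unfolding wj_def poly_Pj by (auto simp: nth_eq_iff_index_eq)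

lemma degree_Pj: assumes "j < length ts" shows "degree (Pj ts j) < length ts"
proof -
  have "degree (Pj ts j) \<le> (\<Sum>k\<in>{..<length ts} - {j}. degree (map lin ts ! k))"
    unfolding Pj_def using degree_prod_sum_le[of "{..<length ts} - {j}" "\<lambda>k. map lin ts ! k"] by (simp add: o_def)
  also have "\<dots> \<le> (\<Sum>k\<in>{..<length ts} - {j}. 1)" by (intro sum_mono) (simp add: lin_def)
  also have "\<dots> = length ts - 1" using assms by simp
  finally show ?thesis using assms by linarith
qed

lemma NV_inverse:
  assumes dist: "distinct ts"
  shows "is_inverse (length ts) (vandermonde (\<lambda>i. ts ! i)) (NV ts)"
  unfolding is_inverse_def
proof (intro conjI allI impI)
  let ?n = "length ts"
  fix i j assume i: "i < ?n" and j: "j < ?n"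
  have "(\<Sum>k<?n. vandermonde (\<lambda>i. ts ! i) i k * NV ts k j) = (\<Sum>k<?n. coeff (Pj ts j) k * (ts ! i) ^ k) / wj ts j"
    by (simp add: vandermonde_def NV_def sum_divide_distrib mult.commute)
  also have "\<dots> = poly (Pj ts j) (ts ! i) / wj ts j" using poly_lt[OF degree_Pj[OF j]] by simp
  also have "\<dots> = (if i = j then 1 else 0)" using poly_Pj_node[OF i j] wj_nz[OF dist j] by simp
  finally show "(\<Sum>k<?n. vandermonde (\<lambda>i. ts ! i) i k * NV ts k j) = (if i = j then 1 else 0)" .
next
  let ?n = "length ts"
  fix i j assume i: "i < ?n" and j: "j < ?n"
  define us where "us = map (\<lambda>k. (ts ! k) ^ j / wj ts k) [0..<?n]"
  define H where "H = NN (map lin ts) us"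
  have cH: "coeff H i = (\<Sum>k<?n. NV ts i k * vandermonde (\<lambda>i. ts ! i) k j)"
    unfolding H_def coeff_NN by (simp add: us_def NV_def vandermonde_def Pj_def mult_ac)
  have "H - monom 1 j = 0"
  proof (rule roots_unique[OF _ dist])
    have "degree (NN (map lin ts) us) < length (map lin ts)" by (rule degree_NN) (use i in \<open>auto simp: lin_def\<close>)
    then have "degree H < ?n" by (simp add: H_def)
    moreover have "degree (monom (1::complex) j) < ?n" using j by (simp add: degree_monom_eq)
    ultimately show "degree (H - monom 1 j) < ?n" using degree_diff_le_max[of H "monom 1 j"] by linarith
  next
    fix t assume "t \<in> set ts"
    then obtain m where m: "m < ?n" "t = ts ! m" by (auto simp: in_set_conv_nth)
    have "poly H t = us ! m * (\<Prod>k\<in>{..<?n} - {m}. poly (map lin ts ! k) (ts ! m))"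
      unfolding H_def m(2) by (subst poly_NN) (use m in auto)
    also have "(\<Prod>k\<in>{..<?n} - {m}. poly (map lin ts ! k) (ts ! m)) = wj ts m"
      by (simp add: wj_def Pj_def poly_prod)
    finally have "poly H t = (ts ! m) ^ j" using wj_nz[OF dist m(1)] m by (simp add: us_def)
    then show "poly (H - monom 1 j) t = 0" using m by (simp add: poly_monom)
  qed
  then have "H = monom 1 j" by simp
  then show "(\<Sum>k<?n. NV ts i k * vandermonde (\<lambda>i. ts ! i) k j) = (if i = j then 1 else 0)"
    using cH by (auto simp: coeff_monom split: if_splits)
qed



lemma VTinv_left:
  assumes len: "length ts = n" and dist: "distinct ts" and nz: "0 \<notin> set ts" and u: "length u = n"
  defines "cs' \<equiv> map (\<lambda>i. 1 / (\<Prod>k\<in>{..<n} - {i}. poly (map tlin ts ! k) (1 / ts ! i))) [0..<n]"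
  defines "a \<equiv> map (\<lambda>j. \<Sum>k<n. (ts ! k) ^ j * u ! k) [0..<n]"
  shows "map (\<lambda>i. poly (Poly (cl n (Poly a * PP (map tlin ts)))) (1 / ts ! i) * cs' ! i) [0..<n] = u"
proof -
  define fs where "fs = map tlin ts"
  define G where "G = (\<Sum>i<length ts. smult (u ! i) (geo n (ts ! i)))"
  have aG: "a = cl n G"
    by (auto simp: a_def cl_def G_def coeff_sum coeff_geo len mult.commute intro!: nth_equalityI)
  have VT: "eqn n (PP fs * G) (NN fs u)" unfolding G_def fs_def by (rule VT_math) (simp add: u len)
  have "eqn n (Poly a * PP fs) (G * PP fs)" unfolding aG by (rule eqn_mult[OF eqn_trunc])
  then have "eqn n (Poly a * PP fs) (NN fs u)" using VT by (simp add: mult.commute eqn_trans)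
  then have "cl n (Poly a * PP fs) = cl n (NN fs u)" by (rule eqn_cl)
  moreover have "Poly (cl (length fs) (NN fs u)) = NN fs u"
    by (rule Poly_cl_NN) (auto simp: fs_def tlin_def)
  then have "Poly (cl n (NN fs u)) = NN fs u" using len by (simp add: fs_def)
  ultimately have PN: "Poly (cl n (Poly a * PP fs)) = NN fs u" by simp
  show ?thesis
  proof (rule nth_equalityI)
    show "length (map (\<lambda>i. poly (Poly (cl n (Poly a * PP (map tlin ts)))) (1 / ts ! i) * cs' ! i) [0..<n]) = length u"
      using u by simp
    fix i assume "i < length (map (\<lambda>i. poly (Poly (cl n (Poly a * PP (map tlin ts)))) (1 / ts ! i) * cs' ! i) [0..<n])"
    then have i: "i < n" by simp
    have ti: "ts ! i \<noteq> 0" using nz i len by (metis nth_mem)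
    have "poly (NN fs u) (1 / ts ! i) = u ! i * (\<Prod>k\<in>{..<n} - {i}. poly (fs ! k) (1 / ts ! i))"
      by (subst poly_NN) (use i len ti in \<open>auto simp: fs_def\<close>)
    moreover have "(\<Prod>k\<in>{..<n} - {i}. poly (fs ! k) (1 / ts ! i)) \<noteq> 0"
    proof -
      have "1 - ts ! k * (1 / ts ! i) \<noteq> 0" if "k < n" "k \<noteq> i" for k
      proof
        assume "1 - ts ! k * (1 / ts ! i) = 0"
        then have "ts ! k = ts ! i" using ti by (simp add: field_simps)
        then show False using that i dist len by (simp add: nth_eq_iff_index_eq)
      qed
      then show ?thesis using len by (auto simp: fs_def)
    qed
    ultimately show "map (\<lambda>i. poly (Poly (cl n (Poly a * PP (map tlin ts)))) (1 / ts ! i) * cs' ! i) [0..<n] ! i = u ! i"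
      using i PN by (simp add: cs'_def fs_def)
  qed
qed

theorem per_n:
  assumes len: "length ts = n" and dist: "distinct ts" and nz: "0 \<notin> set ts"
  defines "V \<equiv> vandermonde (\<lambda>i. ts ! i)"
  shows "alpha n V \<le> enat (257 * n * (clog n + 1)^2)"
    and "alpha n (transp V) \<le> enat (33 * n * (clog n + 1)^2 + pmc (2 * n))"
    and "beta n V \<le> enat (n + 33 * n * (clog n + 1)^2)"
    and "beta n (transp V) \<le> enat (pmc (2 * n) + 257 * n * (clog n + 1)^2 + n)"
proof -
  show "alpha n V \<le> enat (257 * n * (clog n + 1)^2)"
    by (rule alpha_le[OF algV[OF len]]) (simp add: V_def vandermonde_def)
  show "alpha n (transp V) \<le> enat (33 * n * (clog n + 1)^2 + pmc (2 * n))"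
    by (rule alpha_le[OF algVT[OF len]]) (simp add: V_def vandermonde_def transp_def)
  have inv: "is_inverse n V (NV ts)" using NV_inverse[OF dist] len by (simp add: V_def)
  define cs where "cs = map (\<lambda>k. 1 / wj ts k) [0..<n]"
  show "beta n V \<le> enat (n + 33 * n * (clog n + 1)^2)"
  proof (rule beta_le[OF inv algVinv[OF len]])
    show "length cs = n" by (simp add: cs_def)
    fix xs :: "complex list" and i assume "length xs = n" "i < n"
    then show "cl n (NN (map lin ts) (map (\<lambda>i. xs ! i * cs ! i) [0..<n])) ! i = (\<Sum>j<n. NV ts i j * xs ! j)"
      using len by (simp add: coeff_NN cs_def NV_def Pj_def) (simp add: mult.commute)
  qed
  define cs' where "cs' = map (\<lambda>i. 1 / (\<Prod>k\<in>{..<n} - {i}. poly (map tlin ts ! k) (1 / ts ! i))) [0..<n]"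
  define F where "F a = map (\<lambda>i. poly (Poly (cl n (Poly a * PP (map tlin ts)))) (1 / ts ! i) * cs' ! i) [0..<n]" for a
  show "beta n (transp V) \<le> enat (pmc (2 * n) + 257 * n * (clog n + 1)^2 + n)"
  proof (rule beta_le[OF is_inverse_transp[OF inv], of _ F])
    show "rz n n (pmc (2 * n) + 257 * n * (clog n + 1)^2 + n) F"
      unfolding F_def by (rule algVTinv[OF len]) (simp add: cs'_def)
    fix xs :: "complex list" and i assume xs: "length xs = n" and i: "i < n"
    define u where "u = map (\<lambda>i. \<Sum>j<n. NV ts j i * xs ! j) [0..<n]"
    have "map (\<lambda>j. \<Sum>k<n. (ts ! k) ^ j * u ! k) [0..<n] = xs"
    proof (rule nth_equalityI)
      fix j assume "j < length (map (\<lambda>j. \<Sum>k<n. (ts ! k) ^ j * u ! k) [0..<n])"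
      then have j: "j < n" by simp
      have "(\<Sum>k<n. (ts ! k) ^ j * u ! k) = (\<Sum>k<n. \<Sum>l<n. xs ! l * (NV ts l k * V k j))"
        by (intro sum.cong refl) (simp add: u_def sum_distrib_left V_def vandermonde_def mult_ac)
      also have "\<dots> = (\<Sum>l<n. xs ! l * (\<Sum>k<n. NV ts l k * V k j))"
        by (subst sum.swap) (simp add: sum_distrib_left)
      also have "\<dots> = (\<Sum>l<n. xs ! l * (if l = j then 1 else 0))"
        using inv j unfolding is_inverse_def by (intro sum.cong refl) simp
      also have "\<dots> = xs ! j" using j by (simp add: if_distrib cong: if_cong)
      finally show "map (\<lambda>j. \<Sum>k<n. (ts ! k) ^ j * u ! k) [0..<n] ! j = xs ! j" using j by simp
    qed (simp add: xs)
    then have "F xs = u" unfolding F_def cs'_def using VTinv_left[OF len dist nz, of u] by (simp add: u_def)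
    then show "F xs ! i = (\<Sum>j<n. transp (NV ts) i j * xs ! j)" using i by (simp add: u_def transp_def)
  qed
qed



lemma pick:
  assumes d: "0 < d" and F: "finite F"
  shows "\<exists>z::complex. cmod (z - z0) < d \<and> z \<notin> F"
proof -
  define g where "g k = z0 + of_real (d / (real k + 2))" for k :: nat
  have "inj g"
  proof (rule injI)
    fix a b assume "g a = g b"
    then have "d / (real a + 2) = d / (real b + 2)" by (simp add: g_def)
    then have "real a + 2 = real b + 2" using d by (simp add: divide_cancel_left)
    then show "a = b" by simp
  qed
  then have "finite (g -` F)" using F by (rule finite_vimageI[rotated])
  then obtain k where k: "k \<notin> g -` F" using ex_new_if_finite[OF infinite_UNIV_nat] by blast
  have "cmod (g k - z0) = \<bar>d / (real k + 2)\<bar>" unfolding g_def by (simp only: add_diff_cancel_left' norm_of_real)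
  also have "\<dots> = d / (real k + 2)" using d by simp
  also have "\<dots> < d / 1" by (rule divide_strict_left_mono) (use d in auto)
  finally show ?thesis using k by auto
qed

lemma near:
  assumes e: "0 < e"
  shows "\<exists>d>0. \<forall>z::complex. cmod (z - z0) < d \<longrightarrow> (\<forall>j<n. cmod (z ^ j - z0 ^ j) \<le> e)"
proof (induction n)
  case 0 then show ?case by (intro exI[of _ 1]) auto
next
  case (Suc n)
  then obtain d1 where d1: "d1 > 0" "\<forall>z. cmod (z - z0) < d1 \<longrightarrow> (\<forall>j<n. cmod (z ^ j - z0 ^ j) \<le> e)" by blast
  have "isCont (\<lambda>z::complex. z ^ n) z0" by (intro continuous_intros)
  then have "(\<lambda>z::complex. z ^ n) \<midarrow>z0\<rightarrow> z0 ^ n" by (simp add: isCont_def)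
  then obtain d2 where d2: "d2 > 0" "\<forall>z. z \<noteq> z0 \<and> norm (z - z0) < d2 \<longrightarrow> norm (z ^ n - z0 ^ n) < e"
    using e unfolding LIM_eq by blast
  show ?case
  proof (intro exI[of _ "min d1 d2"] conjI allI impI)
    show "0 < min d1 d2" using d1 d2 by simp
    fix z :: complex and j assume z: "cmod (z - z0) < min d1 d2" and j: "j < Suc n"
    show "cmod (z ^ j - z0 ^ j) \<le> e"
    proof (cases "j < n")
      case True then show ?thesis using d1 z by simp
    next
      case False
      then have "j = n" using j by simp
      then show ?thesis using d2 z e by (cases "z = z0") (auto intro: less_imp_le)
    qed
  qed
qed

lemma perturb:
  assumes e: "0 < e"
  shows "\<exists>ts. length ts = n \<and> distinct ts \<and> 0 \<notin> set ts \<and>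
     (\<forall>i<n. \<forall>j<n. cmod ((ts ! i) ^ j - s i ^ j) \<le> e)"
proof -
  have "m \<le> n \<Longrightarrow> \<exists>ts. length ts = m \<and> distinct ts \<and> 0 \<notin> set ts \<and>
     (\<forall>i<m. \<forall>j<n. cmod ((ts ! i) ^ j - s i ^ j) \<le> e)" for m
  proof (induction m)
    case 0 then show ?case by auto
  next
    case (Suc m)
    then obtain ts where ts: "length ts = m" "distinct ts" "0 \<notin> set ts"
      "\<forall>i<m. \<forall>j<n. cmod ((ts ! i) ^ j - s i ^ j) \<le> e" by auto
    obtain d where d: "d > 0" "\<forall>z. cmod (z - s m) < d \<longrightarrow> (\<forall>j<n. cmod (z ^ j - s m ^ j) \<le> e)"
      using near[OF e] by blast
    obtain z where z: "cmod (z - s m) < d" "z \<notin> insert 0 (set ts)" using pick[OF d(1), of "insert 0 (set ts)"] by auto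
    show ?case
    proof (intro exI[of _ "ts @ [z]"] conjI allI impI)
      fix i j assume i: "i < Suc m" and j: "j < n"
      show "cmod (((ts @ [z]) ! i) ^ j - s i ^ j) \<le> e"
      proof (cases "i < m")
        case True then show ?thesis using ts(1,4) j by (simp add: nth_append)
      next
        case False then have "i = m" using i by simp
        then show ?thesis using ts(1) d z j by (simp add: nth_append)
      qed
    qed (use ts z in auto)
  qed
  then show ?thesis by blast
qed

lemma ln2_ge: "1 / 2 \<le> ln (2::real)"
proof -
  have "exp (1 / 2 :: real) * exp (1 / 2) = exp 1" by (simp flip: exp_add)
  also have "\<dots> \<le> 3" by (rule exp_le)
  finally have h: "exp (1 / 2 :: real) * exp (1 / 2) \<le> 3" .
  have "exp (1 / 2 :: real) \<le> 2"
  proof (rule ccontr)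
    assume "\<not> exp (1 / 2 :: real) \<le> 2"
    then have "2 < exp (1 / 2 :: real)" by simp
    then have "2 * 2 < exp (1 / 2 :: real) * exp (1 / 2)" by (intro mult_strict_mono) auto
    then show False using h by simp
  qed
  then show ?thesis by (subst ln_ge_iff) auto
qed

lemma clog_real: "3 \<le> n \<Longrightarrow> real (clog n) + 1 \<le> 4 * ln (real n)"
proof -
  assume n: "3 \<le> n"
  have ln1: "1 \<le> ln (real n)"
  proof -
    have "exp 1 \<le> real n" using exp_le n by linarith
    then show ?thesis by (subst ln_ge_iff) (use n in auto)
  qed
  show ?thesis
  proof (cases "clog n = 0")
    case True then show ?thesis using ln1 by simp
  next
    case False
    then have "2 ^ (clog n - 1) < n" by (intro clog_pos) simp
    then have "real (2 ^ (clog n - 1)) < real n" by linarith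
    then have "ln (2 ^ (clog n - 1)) < ln (real n)" by (simp del: of_nat_power add: ln_less_cancel_iff)
    then have "real (clog n - 1) * ln 2 < ln (real n)" by (simp add: ln_realpow)
    moreover have "real (clog n - 1) * (1 / 2) \<le> real (clog n - 1) * ln 2"
      using ln2_ge by (intro mult_left_mono) auto
    ultimately have "real (clog n - 1) * (1 / 2) < ln (real n)" by linarith
    then have "real (clog n) - 1 \<le> 2 * ln (real n)" using False by (simp add: of_nat_diff)
    then show ?thesis using ln1 by linarith
  qed
qed



lemma nat_ceil_ge: "real k \<le> x \<Longrightarrow> k \<le> nat \<lceil>x\<rceil>"
proof -
  assume "real k \<le> x"
  then have "real k \<le> real_of_int \<lceil>x\<rceil>" using le_of_int_ceiling order_trans by blast
  then have "int k \<le> \<lceil>x\<rceil>" by linarith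
  then show ?thesis by linarith
qed

lemma per_n_eps:
  fixes s :: "nat \<Rightarrow> complex"
  assumes e: "0 < e" and n1: "1 \<le> n"
  defines "V \<equiv> vandermonde s"
  shows "alpha_eps n e V + alpha_eps n e (transp V) \<le> enat (356 * n * (clog n + 1)^2)"
    and "beta_eps n e V + beta_eps n e (transp V) \<le> enat (356 * n * (clog n + 1)^2)"
proof -
  obtain ts where ts: "length ts = n" "distinct ts" "0 \<notin> set ts"
    "\<forall>i<n. \<forall>j<n. cmod ((ts ! i) ^ j - s i ^ j) \<le> e" using perturb[OF e] by blast
  define E where "E i j = (ts ! i) ^ j - s i ^ j" for i j
  have EV: "mat_add V E = vandermonde (\<lambda>i. ts ! i)" by (auto simp: mat_add_def V_def E_def vandermonde_def)
  have ET: "mat_add (transp V) (transp E) = transp (vandermonde (\<lambda>i. ts ! i))"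
    by (auto simp: mat_add_def V_def E_def vandermonde_def transp_def)
  have Eb: "\<forall>i<n. \<forall>j<n. cmod (E i j) \<le> e" using ts(4) by (simp add: E_def)
  have Etb: "\<forall>i<n. \<forall>j<n. cmod (transp E i j) \<le> e" using ts(4) by (simp add: E_def transp_def)
  note pn = per_n[OF ts(1-3)]
  define X where "X = (clog n + 1)^2"
  have X1: "clog n + 1 \<le> X" by (simp add: X_def power2_eq_square)
  have pmcb: "pmc (2 * n) \<le> 64 * n * X"
    using pmc2[OF n1] X1 by (meson le_trans mult_le_mono2)
  have nX: "n \<le> n * X" using X1 by simp
  have a1: "alpha_eps n e V \<le> enat (257 * n * X)"
  proof -
    have "alpha_eps n e V \<le> alpha n (mat_add V E)" unfolding alpha_eps_def using Eb by (intro Inf_lower) blast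
    then show ?thesis using pn(1) unfolding EV X_def by simp
  qed
  have a2: "alpha_eps n e (transp V) \<le> enat (33 * n * X + pmc (2 * n))"
  proof -
    have "alpha_eps n e (transp V) \<le> alpha n (mat_add (transp V) (transp E))" unfolding alpha_eps_def using Etb by (intro Inf_lower) blast
    then show ?thesis using pn(2) unfolding ET X_def by simp
  qed
  have b1: "beta_eps n e V \<le> enat (n + 33 * n * X)"
  proof -
    have "beta_eps n e V \<le> beta n (mat_add V E)" unfolding beta_eps_def using Eb by (intro Inf_lower) blast
    then show ?thesis using pn(3) unfolding EV X_def by simp
  qed
  have b2: "beta_eps n e (transp V) \<le> enat (pmc (2 * n) + 257 * n * X + n)"
  proof -
    have "beta_eps n e (transp V) \<le> beta n (mat_add (transp V) (transp E))" unfolding beta_eps_def using Etb by (intro Inf_lower) blast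
    then show ?thesis using pn(4) unfolding ET X_def by simp
  qed
  have "alpha_eps n e V + alpha_eps n e (transp V) \<le> enat (257 * n * X) + enat (33 * n * X + pmc (2 * n))"
    using a1 a2 by (rule add_mono)
  also have "\<dots> \<le> enat (356 * n * X)"
  proof -
    have "257 * n * X + (33 * n * X + pmc (2 * n)) \<le> 356 * n * X" using pmcb by linarith
    then show ?thesis by simp
  qed
  finally show "alpha_eps n e V + alpha_eps n e (transp V) \<le> enat (356 * n * (clog n + 1)^2)" by (simp add: X_def)
  have "beta_eps n e V + beta_eps n e (transp V) \<le> enat (n + 33 * n * X) + enat (pmc (2 * n) + 257 * n * X + n)"
    using b1 b2 by (rule add_mono)
  also have "\<dots> \<le> enat (356 * n * X)"
  proof -
    have "n + 33 * n * X + (pmc (2 * n) + 257 * n * X + n) \<le> 356 * n * X" using pmcb nX by linarith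
    then show ?thesis by simp
  qed
  finally show "beta_eps n e V + beta_eps n e (transp V) \<le> enat (356 * n * (clog n + 1)^2)" by (simp add: X_def)
qed

lemma s_plus_nonneg: "1 \<le> n \<Longrightarrow> 0 \<le> s_plus n s"
proof -
  assume n: "1 \<le> n"
  have eq: "{cmod (s i) | i. i < n} = (\<lambda>i. cmod (s i)) ` {..<n}" by auto
  have "cmod (s 0) \<le> s_plus n s" unfolding s_plus_def eq using n by (intro Max_ge) auto
  then show ?thesis using norm_ge_zero order_trans by blast
qed

lemma real_bound:
  fixes n :: nat and \<rho> :: real
  assumes n: "3 \<le> n" and rho: "ln (real n) \<le> \<rho>"
  shows "real (356 * n * (clog n + 1)^2) \<le> 6000 * real n * \<rho> * ln (real n)"
    and "real (356 * n * (clog n + 1)^2) \<le> 6000 * real n * \<rho>^2 * ln (real n)"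
proof -
  have ln1: "1 \<le> ln (real n)"
  proof -
    have "exp 1 \<le> real n" using exp_le n by linarith
    then show ?thesis by (subst ln_ge_iff) (use n in auto)
  qed
  have c: "real (clog n) + 1 \<le> 4 * ln (real n)" by (rule clog_real[OF n])
  have "(real (clog n) + 1)^2 \<le> (4 * ln (real n))^2" using c by (intro power_mono) auto
  then have c2: "(real (clog n) + 1)^2 \<le> 16 * (ln (real n))^2" by (simp add: power_mult_distrib)
  have "real (356 * n * (clog n + 1)^2) = 356 * real n * (real (clog n) + 1)^2" by simp
  also have "\<dots> \<le> 356 * real n * (16 * (ln (real n))^2)" using c2 by (intro mult_left_mono) auto
  also have "\<dots> \<le> 6000 * real n * (ln (real n) * ln (real n))" using ln1 by (simp add: power2_eq_square)
  finally have base: "real (356 * n * (clog n + 1)^2) \<le> 6000 * real n * (ln (real n) * ln (real n))" .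
  have r1: "ln (real n) * ln (real n) \<le> \<rho> * ln (real n)" using rho ln1 by (intro mult_right_mono) auto
  have "6000 * real n * (ln (real n) * ln (real n)) \<le> 6000 * real n * (\<rho> * ln (real n))"
    using r1 by (intro mult_left_mono) auto
  then show "real (356 * n * (clog n + 1)^2) \<le> 6000 * real n * \<rho> * ln (real n)"
    using base by (simp add: mult_ac)
  have r0: "1 \<le> \<rho>" using rho ln1 by linarith
  have "\<rho> * ln (real n) \<le> \<rho>^2 * ln (real n)"
    using r0 ln1 by (intro mult_right_mono) (auto simp: power2_eq_square)
  then have r2: "ln (real n) * ln (real n) \<le> \<rho>^2 * ln (real n)" using r1 by linarith
  have "6000 * real n * (ln (real n) * ln (real n)) \<le> 6000 * real n * (\<rho>^2 * ln (real n))"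
    using r2 by (intro mult_left_mono) auto
  then show "real (356 * n * (clog n + 1)^2) \<le> 6000 * real n * \<rho>^2 * ln (real n)"
    using base by (simp add: mult_ac)
qed

theorem theorem9p4:
  fixes \<epsilon> :: "nat \<Rightarrow> real"
  assumes eps_pos: "\<And>n. 0 < \<epsilon> n" and eps_lt1: "\<And>n. \<epsilon> n < 1"
    and eps_log: "(\<lambda>n. ln (1 / \<epsilon> n)) \<in> O(\<lambda>n. ln (real n))"
  shows "\<exists>C::real. \<forall>\<^sub>F n in sequentially. \<forall>s :: nat \<Rightarrow> complex.
      (let \<rho> = ln (real n / \<epsilon> n); e = (s_plus n s + 1) * \<epsilon> n; V = vandermonde s in
        alpha_eps n e V + alpha_eps n e (transp V) \<le> enat (nat \<lceil>C * real n * \<rho> * ln (real n)\<rceil>) \<and>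
        beta_eps n e V + beta_eps n e (transp V) \<le> enat (nat \<lceil>C * real n * \<rho>\<^sup>2 * ln (real n)\<rceil>))"
proof (intro exI[of _ 6000] eventually_sequentiallyI[of 3] allI)
  fix n :: nat and s :: "nat \<Rightarrow> complex"
  assume n: "3 \<le> n"
  define \<rho> where "\<rho> = ln (real n / \<epsilon> n)"
  define e where "e = (s_plus n s + 1) * \<epsilon> n"
  have e0: "0 < e" unfolding e_def using s_plus_nonneg[of n s] n eps_pos[of n]
    by (intro mult_pos_pos) auto
  have rho: "ln (real n) \<le> \<rho>"
  proof -
    have "real n \<le> real n / \<epsilon> n" using eps_pos[of n] eps_lt1[of n] n
      by (simp add: le_divide_eq)
    then show ?thesis unfolding \<rho>_def using n eps_pos[of n] by (subst ln_le_cancel_iff) auto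
  qed
  note rb = real_bound[OF n rho]
  have n1: "1 \<le> n" using n by simp
  note pe = per_n_eps[OF e0 n1, of s]
  have "alpha_eps n e (vandermonde s) + alpha_eps n e (transp (vandermonde s))
      \<le> enat (nat \<lceil>6000 * real n * \<rho> * ln (real n)\<rceil>)"
    using pe(1) nat_ceil_ge[OF rb(1)] by (simp add: order_trans)
  moreover have "beta_eps n e (vandermonde s) + beta_eps n e (transp (vandermonde s))
      \<le> enat (nat \<lceil>6000 * real n * \<rho>\<^sup>2 * ln (real n)\<rceil>)"
    using pe(2) nat_ceil_ge[OF rb(2)] by (simp add: order_trans)
  ultimately show "let \<rho> = ln (real n / \<epsilon> n); e = (s_plus n s + 1) * \<epsilon> n; V = vandermonde s in
        alpha_eps n e V + alpha_eps n e (transp V) \<le> enat (nat \<lceil>6000 * real n * \<rho> * ln (real n)\<rceil>) \<and>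
        beta_eps n e V + beta_eps n e (transp V) \<le> enat (nat \<lceil>6000 * real n * \<rho>\<^sup>2 * ln (real n)\<rceil>)"
    unfolding Let_def \<rho>_def e_def by simp
qed


end
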